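(* Let $E$ and $X$ be Banach spaces. Then there exists an ultrafilter $\mathcal{U}$ (on some index set $I$) such that \[\mathcal F(E,X)^*\cong (E\widehat{\otimes} X^* )_\mathcal{U}/W_0,\] where $W_0=\left\{ (u_\alpha)_\mathcal{U}\in (E\widehat{\otimes} X^* )_\mathcal{U} : \lim_\mathcal{U}u_\alpha(T)=0 \text{ for all } T\in \mathcal{F}(E,X)\right\}$.
   Context: $\mathcal F(E,X)$ denotes the space of bounded finite-rank linear operators from $E$ to $X$ (with the operator norm), and $\mathcal F(E,X)^*$ its dual. $E\widehat{\otimes} X^*$ is the projective tensor product. For $u=\sum_{i=1}^\infty a_i\otimes x_i^*\in E\widehat{\otimes} X^*$ and a bounded operator $T:E\to X$, $u(T)$ denotes $\sum_{i=1}^\infty x_i^*(T(a_i))$. For a Banach space $Y$, an index set $I$ and an ultrafilter $\mathcal U$ on $I$, the ultrapower is $Y_\mathcal{U}=\ell^\infty(Y,I)/\mathcal N_\mathcal{U}$, where $\ell^\infty(Y,I)$ is the space of bounded families $(y_\alpha)_{\alpha\in I}$ in $Y$ with the sup norm and $\mathcal N_\mathcal{U}=\{(y_\alpha): \lim_\mathcal{U}\|y_\alpha\|=0\}$; its norm is $\|(y_\alpha)_\mathcal U\|=\lim_\mathcal U\|y_\alpha\|$, and $(y_\alpha)_\mathcal U$ denotes the class of $(y_\alpha)$. The symbol $\cong$ denotes isometric isomorphism of Banach spaces. *)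

theory Defs
  imports "HOL-Analysis.Analysis"
begin

(* Real Banach spaces; scalars are real.  X^* is the blinfun type 'x \<Rightarrow>\<^sub>L real. *)

definition ultrafilter :: "'i filter \<Rightarrow> bool" where
  "ultrafilter U \<longleftrightarrow> U \<noteq> bot \<and> (\<forall>P. eventually P U \<or> eventually (\<lambda>x. \<not> P x) U)"

definition finite_rank :: "('e::real_normed_vector \<Rightarrow>\<^sub>L 'x::real_normed_vector) \<Rightarrow> bool" where
  "finite_rank T \<longleftrightarrow> (\<exists>B. finite B \<and> range (blinfun_apply T) \<subseteq> span B)"

definition FR :: "('e::real_normed_vector \<Rightarrow>\<^sub>L 'x::real_normed_vector) set" where
  "FR = {T. finite_rank T}"

(* The dual F(E,X)^*: bounded linear functionals on F(E,X), extended by 0 outside F(E,X) *)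
definition fin_dual :: "(('e::real_normed_vector \<Rightarrow>\<^sub>L 'x::real_normed_vector) \<Rightarrow> real) set" where
  "fin_dual = {\<phi>. (\<forall>T\<in>FR. \<forall>S\<in>FR. \<phi> (T + S) = \<phi> T + \<phi> S)
                 \<and> (\<forall>c. \<forall>T\<in>FR. \<phi> (c *\<^sub>R T) = c * \<phi> T)
                 \<and> (\<exists>C. \<forall>T\<in>FR. \<bar>\<phi> T\<bar> \<le> C * norm T)
                 \<and> (\<forall>T. T \<notin> FR \<longrightarrow> \<phi> T = 0)}"

definition dual_norm :: "(('e::real_normed_vector \<Rightarrow>\<^sub>L 'x::real_normed_vector) \<Rightarrow> real) \<Rightarrow> real" where
  "dual_norm \<phi> = Sup {\<bar>\<phi> T\<bar> | T. T \<in> FR \<and> norm T \<le> 1}"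

(* Projective tensor product E \<hat>\<otimes> X^*, realised (isometrically, via the canonical
   embedding into the dual of the bounded bilinear forms on E \<times> X^* ) as the functionals
   B \<mapsto> \<Sum>i. B (a i) (f i) for representations with \<Sum>i. \<parallel>a i\<parallel>\<parallel>f i\<parallel> < \<infinity>,
   with the projective norm (infimum over representations). *)
type_synonym ('e, 'x) ptens = "('e \<Rightarrow> ('x \<Rightarrow>\<^sub>L real) \<Rightarrow> real) \<Rightarrow> real"

definition rep_ok :: "(nat \<Rightarrow> 'e::real_normed_vector) \<Rightarrow> (nat \<Rightarrow> ('x::real_normed_vector \<Rightarrow>\<^sub>L real)) \<Rightarrow> bool" where
  "rep_ok a f \<longleftrightarrow> summable (\<lambda>i. norm (a i) * norm (f i))"

definition tens_rep :: "(nat \<Rightarrow> 'e::real_normed_vector) \<Rightarrow> (nat \<Rightarrow> ('x::real_normed_vector \<Rightarrow>\<^sub>L real)) \<Rightarrow> ('e, 'x) ptens" where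
  "tens_rep a f = (\<lambda>B. if bounded_bilinear B then (\<Sum>i. B (a i) (f i)) else 0)"

definition proj_tensor :: "('e::real_normed_vector, 'x::real_normed_vector) ptens set" where
  "proj_tensor = {tens_rep a f | a f. rep_ok a f}"

definition proj_norm :: "('e::real_normed_vector, 'x::real_normed_vector) ptens \<Rightarrow> real" where
  "proj_norm u = Inf {(\<Sum>i. norm (a i) * norm (f i)) | a f. rep_ok a f \<and> tens_rep a f = u}"

(* u(T) = \<Sum>i. x_i^*(T a_i) *)
definition tens_eval :: "('e::real_normed_vector, 'x::real_normed_vector) ptens \<Rightarrow> ('e \<Rightarrow>\<^sub>L 'x) \<Rightarrow> real" where
  "tens_eval u T = u (\<lambda>a f. blinfun_apply f (blinfun_apply T a))"

(* Ultrapower (E \<hat>\<otimes> X^* )_U = \<ell>^\<infinity>(E \<hat>\<otimes> X^*, I) / N_U, index set I = UNIV of the index type *)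
definition bdd_fam :: "('i \<Rightarrow> ('e::real_normed_vector, 'x::real_normed_vector) ptens) set" where
  "bdd_fam = {\<xi>. (\<forall>\<alpha>. \<xi> \<alpha> \<in> proj_tensor) \<and> (\<exists>M. \<forall>\<alpha>. proj_norm (\<xi> \<alpha>) \<le> M)}"

definition fam_diff :: "('i \<Rightarrow> ('e, 'x) ptens) \<Rightarrow> ('i \<Rightarrow> ('e, 'x) ptens) \<Rightarrow> ('i \<Rightarrow> ('e, 'x) ptens)" where
  "fam_diff \<eta> \<xi> = (\<lambda>\<alpha> B. \<eta> \<alpha> B - \<xi> \<alpha> B)"

definition ucls :: "'i filter \<Rightarrow> ('i \<Rightarrow> ('e::real_normed_vector, 'x::real_normed_vector) ptens) \<Rightarrow> ('i \<Rightarrow> ('e, 'x) ptens) set" where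
  "ucls U \<xi> = {\<eta> \<in> bdd_fam. ((\<lambda>\<alpha>. proj_norm (fam_diff \<eta> \<xi> \<alpha>)) \<longlongrightarrow> 0) U}"

definition ultrapower :: "'i filter \<Rightarrow> (('i \<Rightarrow> ('e::real_normed_vector, 'x::real_normed_vector) ptens) set) set" where
  "ultrapower U = {ucls U \<xi> | \<xi>. \<xi> \<in> bdd_fam}"

definition W0 :: "'i filter \<Rightarrow> (('i \<Rightarrow> ('e::real_normed_vector, 'x::real_normed_vector) ptens) set) set" where
  "W0 U = {ucls U \<xi> | \<xi>. \<xi> \<in> bdd_fam \<and>
             (\<forall>T \<in> FR. ((\<lambda>\<alpha>. tens_eval (\<xi> \<alpha>) T) \<longlongrightarrow> 0) U)}"

definition qcls :: "'i filter \<Rightarrow> ('i \<Rightarrow> ('e::real_normed_vector, 'x::real_normed_vector) ptens) \<Rightarrow> (('i \<Rightarrow> ('e, 'x) ptens) set) set" where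
  "qcls U \<xi> = {ucls U \<eta> | \<eta>. \<eta> \<in> bdd_fam \<and> ucls U (fam_diff \<eta> \<xi>) \<in> W0 U}"

definition ultra_quot :: "'i filter \<Rightarrow> ((('i \<Rightarrow> ('e::real_normed_vector, 'x::real_normed_vector) ptens) set) set) set" where
  "ultra_quot U = {qcls U \<xi> | \<xi>. \<xi> \<in> bdd_fam}"

definition quot_norm :: "'i filter \<Rightarrow> (('i \<Rightarrow> ('e::real_normed_vector, 'x::real_normed_vector) ptens) set) set \<Rightarrow> real" where
  "quot_norm U C = Inf {Lim U (\<lambda>\<alpha>. proj_norm (\<eta> \<alpha>)) | \<eta>. \<eta> \<in> bdd_fam \<and> ucls U \<eta> \<in> C}"

definition isometric_iso_dual_quot ::
  "'i filter \<Rightarrow> ((('e::real_normed_vector \<Rightarrow>\<^sub>L 'x::real_normed_vector) \<Rightarrow> real) \<Rightarrow> (('i \<Rightarrow> ('e, 'x) ptens) set) set) \<Rightarrow> bool" where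
  "isometric_iso_dual_quot U \<Phi> \<longleftrightarrow>
     bij_betw \<Phi> fin_dual (ultra_quot U)
   \<and> (\<forall>\<phi>\<in>fin_dual. \<forall>\<psi>\<in>fin_dual. \<forall>c::real. \<forall>\<xi> \<eta>.
        \<xi> \<in> bdd_fam \<longrightarrow> \<eta> \<in> bdd_fam \<longrightarrow> \<Phi> \<phi> = qcls U \<xi> \<longrightarrow> \<Phi> \<psi> = qcls U \<eta> \<longrightarrow>
        \<Phi> (\<lambda>T. c * \<phi> T + \<psi> T) = qcls U (\<lambda>\<alpha> B. c * \<xi> \<alpha> B + \<eta> \<alpha> B))
   \<and> (\<forall>\<phi>\<in>fin_dual. quot_norm U (\<Phi> \<phi>) = dual_norm \<phi>)"

end

theory Submission
  imports Defs
begin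
lemma ultrafilter_exists:
  fixes F :: "'a filter"
  assumes F: "F \<noteq> bot"
  shows "\<exists>U\<le>F. ultrafilter U"
proof -
  let ?R = "{(b, a). a \<noteq> bot \<and> a \<le> b \<and> b \<le> F}"
  have bot_notin_R: "c \<in> Chains ?R \<Longrightarrow> bot \<notin> c" for c
    by (auto simp: Chains_def)
  have FR: "Field ?R = {G. G \<noteq> bot \<and> G \<le> F}"
    by (auto simp: Field_def bot_unique)
  have "\<exists>m\<in>Field ?R. \<forall>a\<in>Field ?R. (m, a) \<in> ?R \<longrightarrow> a = m"
  proof (rule Zorns_po_lemma)
    show "Partial_order ?R"
      by (auto simp: partial_order_on_def preorder_on_def
          antisym_def refl_on_def trans_def Field_def bot_unique)
    show "\<exists>u\<in>Field ?R. \<forall>a\<in>C. (a, u) \<in> ?R" if C: "C \<in> Chains ?R" for C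
    proof -
      have Inf_C: "Inf C \<noteq> bot" "Inf C \<le> F" if "C \<noteq> {}"
      proof -
        from C that have "Inf C = bot \<longleftrightarrow> (\<exists>x\<in>C. x = bot)"
          unfolding trivial_limit_def by (intro eventually_Inf_base) (auto simp: Chains_def)
        with C show "Inf C \<noteq> bot"
          by (simp add: bot_notin_R)
        from that obtain x where "x \<in> C" by auto
        with C show "Inf C \<le> F"
          by (auto intro!: Inf_lower2[of x] simp: Chains_def)
      qed
      then have e: "inf F (Inf C) = (if C = {} then F else Inf C)"
        using C by (auto simp add: inf_absorb2)
      have 1: "inf F (Inf C) \<in> Field ?R"
        unfolding FR using e Inf_C F by auto
      have 2: "(x, inf F (Inf C)) \<in> ?R" if "x \<in> C" for x
        using that C e Inf_C F by (auto intro: Inf_lower simp: Chains_def)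
      show ?thesis using 1 2 by blast
    qed
  qed
  then obtain U where U0: "U \<in> Field ?R" and max0: "\<forall>a\<in>Field ?R. (U, a) \<in> ?R \<longrightarrow> a = U"
    by blast
  have U: "U \<noteq> bot" "U \<le> F" using U0 unfolding FR by auto
  have max: "G = U" if "G \<noteq> bot" "G \<le> U" for G
  proof -
    have "G \<in> Field ?R" unfolding FR using that U order_trans by blast
    moreover have "(U, G) \<in> ?R" using that U by simp
    ultimately show ?thesis using max0 by blast
  qed
  have "ultrafilter U"
    unfolding ultrafilter_def
  proof (intro conjI allI U(1))
    fix P
    show "eventually P U \<or> eventually (\<lambda>x. \<not> P x) U"
    proof (rule disjCI)
      assume "\<not> eventually (\<lambda>x. \<not> P x) U"
      then have "inf U (principal {x. P x}) \<noteq> bot"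
        by (simp add: trivial_limit_def eventually_inf_principal)
      then have eq: "inf U (principal {x. P x}) = U"
        by (rule max) simp
      have ev: "eventually P (inf U (principal {x. P x}))"
        by (simp add: eventually_inf_principal)
      show "eventually P U" using ev eq by metis
    qed
  qed
  with U show ?thesis by auto
qed

lemma ultra_tendsto_bounded:
  fixes f :: "'a \<Rightarrow> real"
  assumes U: "ultrafilter U" and b: "\<And>x. \<bar>f x\<bar> \<le> M"
  shows "(f \<longlongrightarrow> Lim U f) U"
proof -
  have Ub: "U \<noteq> bot" using U by (simp add: ultrafilter_def)
  have cK: "compact {-M..M}" by simp
  have "filtermap f U \<noteq> bot" using Ub by (simp add: filtermap_bot_iff)
  moreover have "eventually (\<lambda>x. x \<in> {-M..M}) (filtermap f U)"
    using b by (simp add: eventually_filtermap abs_le_iff minus_le_iff)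
  ultimately obtain l where l: "inf (nhds l) (filtermap f U) \<noteq> bot"
    using cK unfolding compact_filter by blast
  have "(f \<longlongrightarrow> l) U"
    unfolding tendsto_def
  proof (intro allI impI)
    fix S assume S: "open S" "l \<in> S"
    show "eventually (\<lambda>x. f x \<in> S) U"
    proof (rule ccontr)
      assume "\<not> eventually (\<lambda>x. f x \<in> S) U"
      then have "eventually (\<lambda>x. f x \<notin> S) U" using U unfolding ultrafilter_def by blast
      then have "eventually (\<lambda>y. y \<notin> S) (filtermap f U)" by (simp add: eventually_filtermap)
      moreover have "eventually (\<lambda>y. y \<in> S) (nhds l)" using S eventually_nhds by blast
      ultimately have "eventually (\<lambda>y. False) (inf (nhds l) (filtermap f U))"
        unfolding eventually_inf by blast
      then show False using l by (simp add: trivial_limit_def)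
    qed
  qed
  then show ?thesis using Ub tendsto_Lim by blast
qed

definition lg :: "('a::real_vector \<Rightarrow> real) \<Rightarrow> ('a \<times> real) set \<Rightarrow> bool" where
  "lg p H \<longleftrightarrow> (0,0) \<in> H \<and> (\<forall>x r y s. (x,r)\<in>H \<longrightarrow> (y,s)\<in>H \<longrightarrow> (x+y, r+s) \<in> H)
     \<and> (\<forall>c x r. (x,r)\<in>H \<longrightarrow> (c *\<^sub>R x, c*r) \<in> H) \<and> (\<forall>r. (0,r)\<in>H \<longrightarrow> r = 0)
     \<and> (\<forall>x r. (x,r)\<in>H \<longrightarrow> r \<le> p x)"

lemma lg_fun:
  assumes "lg p H" "(x,r) \<in> H" "(x,s) \<in> H" shows "r = s"
proof -
  have "((- 1) *\<^sub>R x, (- 1) * s) \<in> H" using assms unfolding lg_def by blast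
  then have "(x + (- 1) *\<^sub>R x, r + (- 1) * s) \<in> H" using assms unfolding lg_def by blast
  then have "(0, r - s) \<in> H" by simp
  then show ?thesis using assms(1) unfolding lg_def by force
qed

lemma hahn_banach_sublinear:
  fixes p :: "'a::real_vector \<Rightarrow> real"
  assumes sub: "\<And>x y. p (x+y) \<le> p x + p y" and hom: "\<And>c x. c > 0 \<Longrightarrow> p (c *\<^sub>R x) = c * p x"
  shows "\<exists>F. linear F \<and> (\<forall>x. F x \<le> p x) \<and> F y = p y"
proof -
  have p0: "p 0 = 0" using hom[of 2 0] by simp
  have pneg: "- p x \<le> p (- x)" for x using sub[of x "-x"] p0 by simp
  define G0 where "G0 = {(t *\<^sub>R y, t * p y) | t. True}"
  have G0: "lg p G0"
    unfolding lg_def G0_def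
  proof (intro conjI allI impI)
    show "(0::'a, 0::real) \<in> {(t *\<^sub>R y, t * p y) |t. True}" by (auto intro!: exI[of _ 0])
  next
    fix x r x' s
    assume "(x, r) \<in> {(t *\<^sub>R y, t * p y) |t. True}" "(x', s) \<in> {(t *\<^sub>R y, t * p y) |t. True}"
    then obtain t t' where "x = t *\<^sub>R y" "r = t * p y" "x' = t' *\<^sub>R y" "s = t' * p y" by auto
    then show "(x + x', r + s) \<in> {(t *\<^sub>R y, t * p y) |t. True}"
      by (auto intro!: exI[of _ "t+t'"] simp: scaleR_add_left distrib_right)
  next
    fix c x r
    assume "(x, r) \<in> {(t *\<^sub>R y, t * p y) |t. True}"
    then obtain t where "x = t *\<^sub>R y" "r = t * p y" by auto
    then show "(c *\<^sub>R x, c * r) \<in> {(t *\<^sub>R y, t * p y) |t. True}"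
      by (auto intro!: exI[of _ "c*t"])
  next
    fix r assume "(0, r) \<in> {(t *\<^sub>R y, t * p y) |t. True}"
    then obtain t where "0 = t *\<^sub>R y" "r = t * p y" by auto
    then show "r = 0" using p0 by auto
  next
    fix x r assume "(x, r) \<in> {(t *\<^sub>R y, t * p y) |t. True}"
    then obtain t where t: "x = t *\<^sub>R y" "r = t * p y" by auto
    show "r \<le> p x"
    proof (cases "t > 0")
      case True then show ?thesis using t hom by simp
    next
      case False
      show ?thesis
      proof (cases "t = 0")
        case True then show ?thesis using t p0 by simp
      next
        case False
        then have "-t > 0" using \<open>\<not> t > 0\<close> by simp
        then have "p ((-t) *\<^sub>R y) = (-t) * p y" using hom by blast
        moreover have "- p ((-t) *\<^sub>R y) \<le> p (- ((-t) *\<^sub>R y))" by (rule pneg)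
        ultimately show ?thesis using t by simp
      qed
    qed
  qed
  define A where "A = {H. lg p H \<and> G0 \<subseteq> H}"
  have "\<exists>M\<in>A. \<forall>X\<in>A. M \<subseteq> X \<longrightarrow> X = M"
  proof (rule Zorn_Lemma2, intro ballI)
    fix C assume C: "C \<in> chains A"
    show "\<exists>U\<in>A. \<forall>X\<in>C. X \<subseteq> U"
    proof (cases "C = {}")
      case True then show ?thesis using G0 unfolding A_def by auto
    next
      case False
      have CA: "C \<subseteq> A" and ch: "\<forall>X\<in>C. \<forall>Y\<in>C. X \<subseteq> Y \<or> Y \<subseteq> X"
        using C unfolding chains_def chain_subset_def by auto
      have two: "\<exists>H\<in>C. a \<in> H \<and> b \<in> H" if ab: "a \<in> \<Union>C" "b \<in> \<Union>C" for a b
      proof -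
        obtain H1 where "H1 \<in> C" "a \<in> H1" using ab(1) by blast
        moreover obtain H2 where "H2 \<in> C" "b \<in> H2" using ab(2) by blast
        ultimately show ?thesis using ch by blast
      qed
      have "lg p (\<Union>C)"
        unfolding lg_def
      proof (intro conjI allI impI)
        obtain H where "H \<in> C" using False by auto
        then show "(0, 0) \<in> \<Union>C" using CA unfolding A_def lg_def by auto
      next
        fix x r x' s assume "(x, r) \<in> \<Union>C" "(x', s) \<in> \<Union>C"
        then obtain H where "H \<in> C" "(x,r) \<in> H" "(x',s) \<in> H" using two by blast
        then show "(x + x', r + s) \<in> \<Union>C" using CA unfolding A_def lg_def by blast
      next
        fix c x r assume "(x, r) \<in> \<Union>C"
        then obtain H where "H \<in> C" "(x,r) \<in> H" by blast
        then show "(c *\<^sub>R x, c * r) \<in> \<Union>C" using CA unfolding A_def lg_def by blast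
      next
        fix r assume "(0, r) \<in> \<Union>C"
        then obtain H where "H \<in> C" "(0,r) \<in> H" by blast
        then show "r = 0" using CA unfolding A_def lg_def by blast
      next
        fix x r assume "(x, r) \<in> \<Union>C"
        then obtain H where "H \<in> C" "(x,r) \<in> H" by blast
        then show "r \<le> p x" using CA unfolding A_def lg_def by blast
      qed
      moreover have "G0 \<subseteq> \<Union>C" using False CA unfolding A_def by blast
      ultimately show ?thesis unfolding A_def by blast
    qed
  qed
  then obtain M where MA: "M \<in> A" and Mmax: "\<And>X. X \<in> A \<Longrightarrow> M \<subseteq> X \<Longrightarrow> X = M" by blast
  have M: "lg p M" and G0M: "G0 \<subseteq> M" using MA unfolding A_def by auto
  note Mdef = M[unfolded lg_def]
  have Madd: "(x+x', r+r') \<in> M" if "(x,r) \<in> M" "(x',r') \<in> M" for x r x' r'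
    using that Mdef by blast
  have Msc: "(c *\<^sub>R x, c*r) \<in> M" if "(x,r) \<in> M" for c x r
    using that Mdef by blast
  have Mdom: "r \<le> p x" if "(x,r) \<in> M" for x r
    using that Mdef by blast
  have total: "\<exists>r. (z, r) \<in> M" for z
  proof (rule ccontr)
    assume nz: "\<not> (\<exists>r. (z, r) \<in> M)"
    define S where "S = {p (x + z) - r | x r. (x,r) \<in> M}"
    have key: "r' - p (x' - z) \<le> p (x + z) - r" if "(x,r) \<in> M" "(x',r') \<in> M" for x r x' r'
    proof -
      have "r + r' \<le> p (x + x')" using Madd[OF that] Mdom by blast
      also have "\<dots> = p ((x + z) + (x' - z))" by (simp add: algebra_simps)
      also have "\<dots> \<le> p (x + z) + p (x' - z)" by (rule sub)
      finally show ?thesis by simp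
    qed
    have Sne: "S \<noteq> {}" unfolding S_def using Mdef by blast
    have Sbdd: "bdd_below S" unfolding S_def bdd_below_def
      using key[of _ _ 0 0] Mdef by blast
    define c where "c = Inf S"
    have c_up: "c \<le> p (x + z) - r" if "(x,r) \<in> M" for x r
      unfolding c_def by (rule cInf_lower[OF _ Sbdd]) (use that S_def in blast)
    have c_lo: "r' - p (x' - z) \<le> c" if "(x',r') \<in> M" for x' r'
      unfolding c_def by (rule cInf_greatest[OF Sne]) (use that key S_def in blast)
    define M' where "M' = {(x + t *\<^sub>R z, r + t * c) | x r t. (x,r) \<in> M}"
    have M'I: "(x + t *\<^sub>R z, r + t * c) \<in> M'" if "(x,r) \<in> M" for x r t
      unfolding M'_def using that by blast
    have "lg p M'"
      unfolding lg_def
    proof (intro conjI allI impI)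
      show "(0, 0) \<in> M'" unfolding M'_def using Mdef by force
    next
      fix x r x' s assume "(x, r) \<in> M'" "(x', s) \<in> M'"
      then obtain x1 r1 t1 x2 r2 t2 where "(x1,r1) \<in> M" "(x2,r2) \<in> M"
        "x = x1 + t1 *\<^sub>R z" "r = r1 + t1 * c" "x' = x2 + t2 *\<^sub>R z" "s = r2 + t2 * c"
        unfolding M'_def by blast
      then have "(x1 + x2 + (t1+t2) *\<^sub>R z, r1 + r2 + (t1+t2) * c) \<in> M'"
        by (intro M'I Madd)
      then show "(x + x', r + s) \<in> M'" using \<open>x = _\<close> \<open>r = _\<close> \<open>x' = _\<close> \<open>s = _\<close>
        by (simp add: algebra_simps)
    next
      fix a x r assume "(x, r) \<in> M'"
      then obtain x1 r1 t1 where "(x1,r1) \<in> M" "x = x1 + t1 *\<^sub>R z" "r = r1 + t1 * c"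
        unfolding M'_def by blast
      then have "(a *\<^sub>R x1 + (a*t1) *\<^sub>R z, a * r1 + (a*t1) * c) \<in> M'"
        by (intro M'I Msc)
      then show "(a *\<^sub>R x, a * r) \<in> M'" using \<open>x = _\<close> \<open>r = _\<close>
        by (simp add: algebra_simps)
    next
      fix r assume "(0, r) \<in> M'"
      then obtain x1 r1 t1 where x1: "(x1,r1) \<in> M" "0 = x1 + t1 *\<^sub>R z" "r = r1 + t1 * c"
        unfolding M'_def by blast
      show "r = 0"
      proof (cases "t1 = 0")
        case True
        then have "x1 = 0" using x1 by simp
        then have "r1 = 0" using x1 Mdef by blast
        then show ?thesis using x1 True by simp
      next
        case False
        have "((- 1 / t1) *\<^sub>R x1, (- 1 / t1) * r1) \<in> M" using Msc x1 by blast
        moreover have "(- 1 / t1) *\<^sub>R x1 = z"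
        proof -
          have "x1 = - (t1 *\<^sub>R z)" using x1(2) by (simp add: eq_neg_iff_add_eq_0)
          then show ?thesis using False by simp
        qed
        ultimately show ?thesis using nz by auto
      qed
    next
      fix x r assume "(x, r) \<in> M'"
      then obtain x1 r1 t where x1: "(x1,r1) \<in> M" "x = x1 + t *\<^sub>R z" "r = r1 + t * c"
        unfolding M'_def by blast
      show "r \<le> p x"
      proof (cases "t > 0")
        case True
        have m: "((1/t) *\<^sub>R x1, (1/t) * r1) \<in> M" using Msc x1 by blast
        have "c \<le> p ((1/t) *\<^sub>R x1 + z) - (1/t) * r1" by (rule c_up[OF m])
        then have "t * c \<le> t * (p ((1/t) *\<^sub>R x1 + z) - (1/t) * r1)"
          using True by (simp add: mult_left_mono)
        also have "\<dots> = t * p ((1/t) *\<^sub>R (x1 + t *\<^sub>R z)) - r1"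
          using True by (simp add: algebra_simps)
        also have "\<dots> = p (x1 + t *\<^sub>R z) - r1"
          using True hom[of "1/t" "x1 + t *\<^sub>R z"] by simp
        finally show ?thesis using x1 by simp
      next
        case False
        show ?thesis
        proof (cases "t = 0")
          case True then show ?thesis using x1 Mdom by simp
        next
          case False
          define s where "s = -t"
          have s: "s > 0" using False \<open>\<not> t > 0\<close> s_def by simp
          have m: "((1/s) *\<^sub>R x1, (1/s) * r1) \<in> M" using Msc x1 by blast
          have "(1/s) * r1 - p ((1/s) *\<^sub>R x1 - z) \<le> c" by (rule c_lo[OF m])
          then have "s * ((1/s) * r1 - p ((1/s) *\<^sub>R x1 - z)) \<le> s * c"
            using s by (simp add: mult_left_mono)
          moreover have "s * ((1/s) * r1 - p ((1/s) *\<^sub>R x1 - z)) = r1 - s * p ((1/s) *\<^sub>R (x1 - s *\<^sub>R z))"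
            using s by (simp add: algebra_simps)
          moreover have "s * p ((1/s) *\<^sub>R (x1 - s *\<^sub>R z)) = p (x1 - s *\<^sub>R z)"
            using s hom[of "1/s" "x1 - s *\<^sub>R z"] by simp
          ultimately have "r1 - p (x1 - s *\<^sub>R z) \<le> s * c" by simp
          then show ?thesis using x1 s_def by (simp add: algebra_simps)
        qed
      qed
    qed
    moreover have "M \<subseteq> M'"
    proof
      fix a assume "a \<in> M"
      then show "a \<in> M'" using M'I[of "fst a" "snd a" 0] by simp
    qed
    moreover then have "G0 \<subseteq> M'" using G0M by blast
    ultimately have "M' = M" using Mmax unfolding A_def by blast
    moreover have "(z, c) \<in> M'"
      using M'I[of 0 0 1] Mdef by simp
    ultimately show False using nz by blast
  qed
  define F where "F x = (THE r. (x, r) \<in> M)" for x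
  have FM: "(x, F x) \<in> M" for x
  proof -
    obtain r where r: "(x,r) \<in> M" using total by blast
    then have "F x = r" unfolding F_def using lg_fun[OF M r] by blast
    then show ?thesis using r by simp
  qed
  have Feq: "F x = r" if "(x,r) \<in> M" for x r
    using lg_fun[OF M that FM] by simp
  have "linear F"
    by (rule linearI) (auto intro!: Feq Madd Msc FM)
  moreover have "\<forall>x. F x \<le> p x" using FM Mdom by blast
  moreover have "F y = p y"
  proof -
    have "(y, p y) \<in> G0" unfolding G0_def by (auto intro!: exI[of _ 1])
    then show ?thesis using G0M Feq by blast
  qed
  ultimately show ?thesis by blast
qed

lemma bb_eval:
  fixes T :: "'e::real_normed_vector \<Rightarrow>\<^sub>L 'x::real_normed_vector"
  shows "bounded_bilinear (\<lambda>a (f::'x \<Rightarrow>\<^sub>L real). blinfun_apply f (blinfun_apply T a))"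
proof -
  have "bounded_bilinear (\<lambda>(x::'x) (y::'x \<Rightarrow>\<^sub>L real). blinfun_apply y x)"
    by (rule bounded_bilinear.flip[OF bounded_bilinear_blinfun_apply])
  from bounded_bilinear.comp1[OF this blinfun.bounded_linear_right[of T]]
  show ?thesis by simp
qed

lemma bb_summable:
  fixes B :: "'e::real_normed_vector \<Rightarrow> ('x::real_normed_vector \<Rightarrow>\<^sub>L real) \<Rightarrow> real"
  assumes B: "bounded_bilinear B" and r: "rep_ok a f"
  shows "summable (\<lambda>i. B (a i) (f i))"
proof -
  obtain K where K: "\<And>x y. norm (B x y) \<le> norm x * norm y * K"
    using bounded_bilinear.bounded[OF B] by blast
  have "summable (\<lambda>i. norm (a i) * norm (f i) * K)"
    using r unfolding rep_ok_def by (rule summable_mult2)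
  then show ?thesis
    by (rule summable_comparison_test'[where N=0]) (use K in \<open>auto simp: mult.assoc\<close>)
qed

lemma interleave_sums:
  fixes h1 h2 :: "nat \<Rightarrow> real"
  assumes "h1 sums s1" "h2 sums s2"
  shows "(\<lambda>j. if even j then h1 (j div 2) else h2 (j div 2)) sums (s1 + s2)"
proof -
  define e where "e j = (if even j then h1 (j div 2) else 0)" for j
  define od where "od j = (if even j then 0 else h2 (j div 2))" for j
  have sm1: "strict_mono (\<lambda>n::nat. 2*n)" by (simp add: strict_mono_def)
  have sm2: "strict_mono (\<lambda>n::nat. 2*n+1)" by (simp add: strict_mono_def)
  have "(\<lambda>n. e (2*n)) sums s1" unfolding e_def using assms(1) by simp
  then have 1: "e sums s1"
    by (subst (asm) sums_mono_reindex[OF sm1]) (auto simp: e_def elim!: evenE)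
  have "(\<lambda>n. od (2*n+1)) sums s2" unfolding od_def using assms(2) by simp
  then have 2: "od sums s2"
    by (subst (asm) sums_mono_reindex[OF sm2]) (auto simp: od_def elim!: oddE)
  have "(\<lambda>j. e j + od j) sums (s1 + s2)" using 1 2 by (rule sums_add)
  moreover have "(\<lambda>j. e j + od j) = (\<lambda>j. if even j then h1 (j div 2) else h2 (j div 2))"
    by (auto simp: e_def od_def)
  ultimately show ?thesis by simp
qed

definition ilv_a :: "real \<Rightarrow> (nat \<Rightarrow> 'e::real_normed_vector) \<Rightarrow> (nat \<Rightarrow> 'e) \<Rightarrow> nat \<Rightarrow> 'e" where
  "ilv_a c a b j = (if even j then c *\<^sub>R a (j div 2) else b (j div 2))"
definition ilv_f :: "(nat \<Rightarrow> 'f) \<Rightarrow> (nat \<Rightarrow> 'f) \<Rightarrow> nat \<Rightarrow> 'f" where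
  "ilv_f f g j = (if even j then f (j div 2) else g (j div 2))"

lemma ilv_cost_sums:
  assumes "rep_ok a f" "rep_ok b g"
  shows "(\<lambda>j. norm (ilv_a c a b j) * norm (ilv_f f g j)) sums
     (\<bar>c\<bar> * (\<Sum>i. norm (a i) * norm (f i)) + (\<Sum>i. norm (b i) * norm (g i)))"
proof -
  have "(\<lambda>i. \<bar>c\<bar> * (norm (a i) * norm (f i))) sums (\<bar>c\<bar> * (\<Sum>i. norm (a i) * norm (f i)))"
    using assms(1) unfolding rep_ok_def by (intro sums_mult summable_sums)
  moreover have "(\<lambda>i. norm (b i) * norm (g i)) sums (\<Sum>i. norm (b i) * norm (g i))"
    using assms(2) unfolding rep_ok_def by (intro summable_sums)
  ultimately have "(\<lambda>j. if even j then \<bar>c\<bar> * (norm (a (j div 2)) * norm (f (j div 2)))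
        else norm (b (j div 2)) * norm (g (j div 2))) sums
     (\<bar>c\<bar> * (\<Sum>i. norm (a i) * norm (f i)) + (\<Sum>i. norm (b i) * norm (g i)))"
    by (rule interleave_sums)
  then show ?thesis by (simp add: ilv_a_def ilv_f_def if_distrib if_distribR mult.assoc cong: if_cong)
qed

lemma ilv_rep_ok:
  assumes "rep_ok a f" "rep_ok b g"
  shows "rep_ok (ilv_a c a b) (ilv_f f g)"
  using ilv_cost_sums[OF assms] unfolding rep_ok_def by (rule sums_summable)

lemma ilv_tens:
  assumes "rep_ok a f" "rep_ok b g"
  shows "tens_rep (ilv_a c a b) (ilv_f f g) = (\<lambda>B. c * tens_rep a f B + tens_rep b g B)"
proof (rule ext)
  fix B
  show "tens_rep (ilv_a c a b) (ilv_f f g) B = c * tens_rep a f B + tens_rep b g B"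
  proof (cases "bounded_bilinear B")
    case True
    have "(\<lambda>i. c * B (a i) (f i)) sums (c * (\<Sum>i. B (a i) (f i)))"
      using bb_summable[OF True assms(1)] by (intro sums_mult summable_sums)
    moreover have "(\<lambda>i. B (b i) (g i)) sums (\<Sum>i. B (b i) (g i))"
      using bb_summable[OF True assms(2)] by (intro summable_sums)
    ultimately have "(\<lambda>j. if even j then c * B (a (j div 2)) (f (j div 2))
        else B (b (j div 2)) (g (j div 2))) sums (c * (\<Sum>i. B (a i) (f i)) + (\<Sum>i. B (b i) (g i)))"
      by (rule interleave_sums)
    moreover have "(\<lambda>j. if even j then c * B (a (j div 2)) (f (j div 2))
        else B (b (j div 2)) (g (j div 2))) = (\<lambda>j. B (ilv_a c a b j) (ilv_f f g j))"
      using bounded_bilinear.scaleR_left[OF True] by (auto simp: ilv_a_def ilv_f_def)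
    ultimately show ?thesis unfolding tens_rep_def using True by (simp add: sums_iff)
  next
    case False
    then show ?thesis unfolding tens_rep_def by simp
  qed
qed

lemma pn_le:
  assumes "rep_ok a f" "tens_rep a f = u"
  shows "proj_norm u \<le> (\<Sum>i. norm (a i) * norm (f i))"
  unfolding proj_norm_def
  by (rule cInf_lower) (use assms in \<open>auto intro!: bdd_belowI[of _ 0] suminf_nonneg simp: rep_ok_def\<close>)

lemma pn_nonneg:
  assumes "u \<in> proj_tensor" shows "0 \<le> proj_norm u"
  unfolding proj_norm_def
  by (rule cInf_greatest) (use assms in \<open>auto intro!: suminf_nonneg simp: rep_ok_def proj_tensor_def\<close>)

lemma pn_approx:
  assumes "u \<in> proj_tensor" "e > 0"
  shows "\<exists>a f. rep_ok a f \<and> tens_rep a f = u \<and> (\<Sum>i. norm (a i) * norm (f i)) < proj_norm u + e"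
proof -
  let ?S = "{(\<Sum>i. norm (a i) * norm (f i)) | a f. rep_ok a f \<and> tens_rep a f = u}"
  have ne: "?S \<noteq> {}" using assms unfolding proj_tensor_def by auto
  have bd: "bdd_below ?S" by (auto intro!: bdd_belowI[of _ 0] suminf_nonneg simp: rep_ok_def)
  have "Inf ?S < proj_norm u + e" using assms unfolding proj_norm_def by simp
  then obtain x where "x \<in> ?S" "x < proj_norm u + e" using cInf_less_iff[OF ne bd] by blast
  then show ?thesis by blast
qed

lemma tens_comb:
  assumes u: "u \<in> proj_tensor" and v: "v \<in> proj_tensor"
  shows "(\<lambda>B. c * u B + v B) \<in> proj_tensor"
    and "proj_norm (\<lambda>B. c * u B + v B) \<le> \<bar>c\<bar> * proj_norm u + proj_norm v"
proof -
  obtain a f where af: "rep_ok a f" "tens_rep a f = u" using u unfolding proj_tensor_def by blast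
  obtain b g where bg: "rep_ok b g" "tens_rep b g = v" using v unfolding proj_tensor_def by blast
  have "(\<lambda>B. c * u B + v B) = tens_rep (ilv_a c a b) (ilv_f f g)"
    using ilv_tens[OF af(1) bg(1), of c] af bg by simp
  then show "(\<lambda>B. c * u B + v B) \<in> proj_tensor"
    unfolding proj_tensor_def using ilv_rep_ok[OF af(1) bg(1), of c] by blast
  show "proj_norm (\<lambda>B. c * u B + v B) \<le> \<bar>c\<bar> * proj_norm u + proj_norm v"
  proof (rule field_le_epsilon)
    fix e :: real assume e: "e > 0"
    define e' where "e' = e / (\<bar>c\<bar> + 1)"
    have nz: "\<bar>c\<bar> + 1 > 0" by (smt (verit) abs_ge_zero)
    have e': "e' > 0" unfolding e'_def using e nz by (rule divide_pos_pos)
    have ee: "\<bar>c\<bar> * e' + e' = e"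
    proof -
      have "\<bar>c\<bar> * e' + e' = (\<bar>c\<bar> + 1) * e'" by (simp add: algebra_simps)
      also have "\<dots> = e" unfolding e'_def using nz by simp
      finally show ?thesis .
    qed
    obtain a f where af: "rep_ok a f" "tens_rep a f = u" "(\<Sum>i. norm (a i) * norm (f i)) < proj_norm u + e'"
      using pn_approx[OF u e'] by blast
    obtain b g where bg: "rep_ok b g" "tens_rep b g = v" "(\<Sum>i. norm (b i) * norm (g i)) < proj_norm v + e'"
      using pn_approx[OF v e'] by blast
    have "proj_norm (\<lambda>B. c * u B + v B) \<le> (\<Sum>j. norm (ilv_a c a b j) * norm (ilv_f f g j))"
      by (rule pn_le[OF ilv_rep_ok[OF af(1) bg(1)]]) (use ilv_tens[OF af(1) bg(1)] af bg in simp)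
    also have "\<dots> = \<bar>c\<bar> * (\<Sum>i. norm (a i) * norm (f i)) + (\<Sum>i. norm (b i) * norm (g i))"
      using ilv_cost_sums[OF af(1) bg(1)] by (simp add: sums_iff)
    also have "\<dots> \<le> \<bar>c\<bar> * (proj_norm u + e') + (proj_norm v + e')"
      using af(3) bg(3) by (intro add_mono mult_left_mono) auto
    also have "\<dots> = \<bar>c\<bar> * proj_norm u + proj_norm v + (\<bar>c\<bar> * e' + e')" by (simp add: algebra_simps)
    finally show "proj_norm (\<lambda>B. c * u B + v B) \<le> \<bar>c\<bar> * proj_norm u + proj_norm v + e"
      using ee by simp
  qed
qed

lemma tens_zero: "(\<lambda>B. 0) \<in> (proj_tensor :: ('e::real_normed_vector,'x::real_normed_vector) ptens set)"
   "proj_norm (\<lambda>B::'e \<Rightarrow> ('x \<Rightarrow>\<^sub>L real) \<Rightarrow> real. 0::real) = 0"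
proof -
  have r: "rep_ok (\<lambda>_. 0::'e) (\<lambda>_. 0::'x \<Rightarrow>\<^sub>L real)"
    unfolding rep_ok_def by simp
  have t: "tens_rep (\<lambda>_. 0::'e) (\<lambda>_. 0::'x \<Rightarrow>\<^sub>L real) = (\<lambda>B. 0)"
    unfolding tens_rep_def by (auto simp: bounded_bilinear.zero_left)
  show z: "(\<lambda>B. 0) \<in> (proj_tensor :: ('e,'x) ptens set)" unfolding proj_tensor_def mem_Collect_eq
    by (intro exI conjI) (rule t[symmetric], rule r)
  have "proj_norm (\<lambda>B::'e \<Rightarrow> ('x \<Rightarrow>\<^sub>L real) \<Rightarrow> real. 0::real) \<le> (\<Sum>i. norm (0::'e) * norm (0::'x \<Rightarrow>\<^sub>L real))"
    using pn_le[OF r t] by simp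
  then show "proj_norm (\<lambda>B::'e \<Rightarrow> ('x \<Rightarrow>\<^sub>L real) \<Rightarrow> real. 0::real) = 0" using pn_nonneg[OF z] by simp
qed

lemma tens_eval_bound:
  fixes T :: "'e::real_normed_vector \<Rightarrow>\<^sub>L 'x::real_normed_vector"
  assumes u: "u \<in> proj_tensor"
  shows "\<bar>tens_eval u T\<bar> \<le> proj_norm u * norm T"
proof (rule field_le_epsilon)
  fix e :: real assume e: "e > 0"
  define e' where "e' = e / (norm T + 1)"
  have nT: "norm T + 1 > 0" by (smt (verit) norm_ge_zero)
  have e': "e' > 0" unfolding e'_def using e nT by (rule divide_pos_pos)
  have ee: "e' * norm T \<le> e"
  proof -
    have "e' * norm T \<le> e' * (norm T + 1)" using e' by simp
    also have "\<dots> = e" unfolding e'_def using nT by simp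
    finally show ?thesis .
  qed
  obtain a f where af: "rep_ok a f" "tens_rep a f = u" "(\<Sum>i. norm (a i) * norm (f i)) < proj_norm u + e'"
    using pn_approx[OF u e'] by blast
  have bb: "bounded_bilinear (\<lambda>a (f::'x \<Rightarrow>\<^sub>L real). blinfun_apply f (blinfun_apply T a))" by (rule bb_eval)
  have tv: "tens_eval u T = (\<Sum>i. blinfun_apply (f i) (blinfun_apply T (a i)))"
    unfolding tens_eval_def using af(2)[symmetric] bb by (simp add: tens_rep_def)
  have nb: "norm (blinfun_apply (f i) (blinfun_apply T (a i))) \<le> norm (a i) * norm (f i) * norm T" for i
  proof -
    have "norm (blinfun_apply (f i) (blinfun_apply T (a i))) \<le> norm (f i) * norm (blinfun_apply T (a i))"
      by (rule norm_blinfun)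
    also have "\<dots> \<le> norm (f i) * (norm T * norm (a i))"
      by (intro mult_left_mono norm_blinfun) auto
    finally show ?thesis by (simp add: algebra_simps)
  qed
  have sm: "summable (\<lambda>i. norm (a i) * norm (f i) * norm T)"
    using af(1) unfolding rep_ok_def by (rule summable_mult2)
  have "\<bar>tens_eval u T\<bar> \<le> (\<Sum>i. norm (a i) * norm (f i) * norm T)"
  proof -
    let ?g = "\<lambda>i. blinfun_apply (f i) (blinfun_apply T (a i))"
    have ga: "summable (\<lambda>i. \<bar>?g i\<bar>)"
      by (rule summable_comparison_test'[OF sm, where N=0]) (use nb in auto)
    have "\<bar>suminf ?g\<bar> \<le> (\<Sum>i. \<bar>?g i\<bar>)" by (rule summable_rabs[OF ga])
    also have "\<dots> \<le> (\<Sum>i. norm (a i) * norm (f i) * norm T)"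
      by (rule suminf_le[OF _ ga sm]) (use nb in auto)
    finally show ?thesis unfolding tv .
  qed
  also have "\<dots> = (\<Sum>i. norm (a i) * norm (f i)) * norm T"
    using af(1) unfolding rep_ok_def by (rule suminf_mult2[symmetric])
  also have "\<dots> \<le> (proj_norm u + e') * norm T"
    using af(3) by (intro mult_right_mono) auto
  also have "\<dots> \<le> proj_norm u * norm T + e" using ee by (simp add: algebra_simps)
  finally show "\<bar>tens_eval u T\<bar> \<le> proj_norm u * norm T + e" .
qed

instantiation "fun" :: (type, zero) zero
begin
definition zero_fun_def: "0 = (\<lambda>x. 0)"
instance ..
end

instantiation "fun" :: (type, plus) plus
begin
definition plus_fun_def: "f + g = (\<lambda>x. f x + g x)"
instance ..
end

lemma zero_fun_apply [simp]: "(0 :: 'a \<Rightarrow> 'b::zero) x = 0" by (simp add: zero_fun_def)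
lemma plus_fun_apply [simp]: "(f + g) x = f x + g x" by (simp add: plus_fun_def)

instance "fun" :: (type, ab_group_add) ab_group_add
  by standard (auto simp: fun_eq_iff algebra_simps)

instantiation "fun" :: (type, real_vector) real_vector
begin
definition scaleR_fun_def: "scaleR c f = (\<lambda>x. scaleR c (f x))"
instance by standard (auto simp: fun_eq_iff scaleR_fun_def algebra_simps)
end

lemma scaleR_fun_apply [simp]: "(scaleR c f) x = scaleR c (f x)" by (simp add: scaleR_fun_def)

lemma sum_fun_apply: "(sum f A) x = sum (\<lambda>a. f a x) A"
  by (induction A rule: infinite_finite_induct) auto

lemma norming:
  fixes x :: "'x::real_normed_vector"
  shows "\<exists>f::'x \<Rightarrow>\<^sub>L real. norm f \<le> 1 \<and> blinfun_apply f x = norm x"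
proof -
  obtain F where F: "linear F" "\<forall>v. F v \<le> norm v" "F x = norm x"
    using hahn_banach_sublinear[of norm x] by (auto simp: norm_triangle_ineq)
  have ab: "\<bar>F v\<bar> \<le> norm v" for v
  proof -
    have "F (- v) = - F v" using F(1) by (simp add: linear_neg)
    then show ?thesis using F(2)[rule_format, of v] F(2)[rule_format, of "-v"] by auto
  qed
  have bl: "bounded_linear F"
    by (rule bounded_linear_intro[where K=1])
      (use F(1) ab in \<open>auto simp: linear_add linear_scale\<close>)
  show ?thesis
  proof (intro exI conjI)
    show "norm (Blinfun F) \<le> 1"
      by (rule norm_blinfun_bound) (use ab bl in \<open>auto simp: bounded_linear_Blinfun_apply\<close>)
    show "blinfun_apply (Blinfun F) x = norm x" using bl F(3) by (simp add: bounded_linear_Blinfun_apply)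
  qed
qed

lemma fr_zero: "0 \<in> FR"
  unfolding FR_def finite_rank_def by (auto intro!: exI[of _ "{}"])

lemma fr_add: assumes "T \<in> FR" "S \<in> FR" shows "T + S \<in> FR"
proof -
  obtain B1 where B1: "finite B1" "range (blinfun_apply T) \<subseteq> span B1" using assms unfolding FR_def finite_rank_def by auto
  obtain B2 where B2: "finite B2" "range (blinfun_apply S) \<subseteq> span B2" using assms unfolding FR_def finite_rank_def by auto
  have "range (blinfun_apply (T + S)) \<subseteq> span (B1 \<union> B2)"
  proof
    fix y assume "y \<in> range (blinfun_apply (T + S))"
    then obtain a where "y = T a + S a" by (auto simp: blinfun.add_left)
    moreover have "T a \<in> span (B1 \<union> B2)" using B1 span_mono[of B1 "B1 \<union> B2"] by auto
    moreover have "S a \<in> span (B1 \<union> B2)" using B2 span_mono[of B2 "B1 \<union> B2"] by auto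
    ultimately show "y \<in> span (B1 \<union> B2)" by (simp add: span_add)
  qed
  then show ?thesis unfolding FR_def finite_rank_def using B1 B2 by blast
qed

lemma fr_scale: assumes "T \<in> FR" shows "c *\<^sub>R T \<in> FR"
proof -
  obtain B1 where B1: "finite B1" "range (blinfun_apply T) \<subseteq> span B1" using assms unfolding FR_def finite_rank_def by auto
  have "range (blinfun_apply (c *\<^sub>R T)) \<subseteq> span B1"
  proof
    fix y assume "y \<in> range (blinfun_apply (c *\<^sub>R T))"
    then obtain a where "y = c *\<^sub>R T a" by (auto simp: blinfun.scaleR_left)
    moreover have "T a \<in> span B1" using B1 by auto
    ultimately show "y \<in> span B1" by (simp add: span_scale)
  qed
  then show ?thesis unfolding FR_def finite_rank_def using B1 by blast
qed

lemma fr_sum: assumes "finite G" "G \<subseteq> FR" shows "(\<Sum>T\<in>G. c T *\<^sub>R T) \<in> FR"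
  using assms by (induction G rule: finite_induct) (auto intro!: fr_add fr_scale fr_zero)

lemma fin_dualD:
  assumes "\<phi> \<in> fin_dual"
  shows "\<And>T S. T \<in> FR \<Longrightarrow> S \<in> FR \<Longrightarrow> \<phi> (T + S) = \<phi> T + \<phi> S"
    and "\<And>c T. T \<in> FR \<Longrightarrow> \<phi> (c *\<^sub>R T) = c * \<phi> T"
    and "\<exists>C. \<forall>T\<in>FR. \<bar>\<phi> T\<bar> \<le> C * norm T"
    and "\<And>T. T \<notin> FR \<Longrightarrow> \<phi> T = 0"
  using assms unfolding fin_dual_def by auto

lemma phi_sum:
  assumes "\<phi> \<in> fin_dual" "finite G" "G \<subseteq> FR"
  shows "\<phi> (\<Sum>T\<in>G. c T *\<^sub>R T) = (\<Sum>T\<in>G. c T * \<phi> T)"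
  using assms(2,3)
proof (induction G rule: finite_induct)
  case empty
  have "\<phi> 0 = \<phi> (0 *\<^sub>R 0)" by simp
  also have "\<dots> = 0" using fin_dualD(2)[OF assms(1) fr_zero, of 0] by simp
  finally show ?case by simp
next
  case (insert x F)
  then have "(\<Sum>T\<in>F. c T *\<^sub>R T) \<in> FR" "x \<in> FR" using fr_sum[of F c] by auto
  then have "\<phi> (c x *\<^sub>R x + (\<Sum>T\<in>F. c T *\<^sub>R T)) = c x * \<phi> x + \<phi> (\<Sum>T\<in>F. c T *\<^sub>R T)"
    by (simp add: fin_dualD(1)[OF assms(1) fr_scale] fin_dualD(2)[OF assms(1)])
  then show ?case using insert by simp
qed

lemma dual_norm_props:
  assumes "\<phi> \<in> fin_dual"
  shows "0 \<le> dual_norm \<phi>" and "\<And>T. T \<in> FR \<Longrightarrow> \<bar>\<phi> T\<bar> \<le> dual_norm \<phi> * norm T"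
    and "bdd_above {\<bar>\<phi> T\<bar> | T. T \<in> FR \<and> norm T \<le> 1}"
proof -
  obtain C where C: "\<forall>T\<in>FR. \<bar>\<phi> T\<bar> \<le> C * norm T" using fin_dualD(3)[OF assms] by blast
  let ?S = "{\<bar>\<phi> T\<bar> | T. T \<in> FR \<and> norm T \<le> 1}"
  show bdd: "bdd_above ?S"
  proof (rule bdd_aboveI[of _ "\<bar>C\<bar>"])
    fix x assume "x \<in> ?S"
    then obtain T where T: "x = \<bar>\<phi> T\<bar>" "T \<in> FR" "norm T \<le> 1" by auto
    have "C * norm T \<le> \<bar>C\<bar>"
      using T(3) by (smt (verit) mult_left_mono norm_ge_zero mult.commute mult_nonneg_nonneg abs_ge_zero
          abs_mult_pos mult_cancel_left1 mult_right_le_one_le)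
    then show "x \<le> \<bar>C\<bar>" using C T by fastforce
  qed
  have phi0: "\<phi> 0 = 0"
  proof -
    have "\<phi> 0 = \<phi> (0 *\<^sub>R 0)" by simp
    also have "\<dots> = 0" using fin_dualD(2)[OF assms fr_zero, of 0] by simp
    finally show ?thesis .
  qed
  have "0 \<in> ?S" using fr_zero phi0 by force
  then show M0: "0 \<le> dual_norm \<phi>" unfolding dual_norm_def using bdd by (rule cSup_upper)
  show "\<bar>\<phi> T\<bar> \<le> dual_norm \<phi> * norm T" if T: "T \<in> FR" for T
  proof (cases "T = 0")
    case True then show ?thesis using phi0 by simp
  next
    case False
    then have nT: "norm T > 0" by simp
    have "\<bar>\<phi> ((1 / norm T) *\<^sub>R T)\<bar> \<in> ?S" using fr_scale[OF T] False by force
    then have "\<bar>\<phi> ((1 / norm T) *\<^sub>R T)\<bar> \<le> dual_norm \<phi>" unfolding dual_norm_def using bdd by (rule cSup_upper)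
    then have "\<bar>\<phi> T\<bar> / norm T \<le> dual_norm \<phi>" using fin_dualD(2)[OF assms T] nT by (simp add: abs_mult)
    then show ?thesis using nT by (simp add: divide_le_eq)
  qed
qed

definition fval :: "('e::real_normed_vector \<times> ('x::real_normed_vector \<Rightarrow>\<^sub>L real)) list \<Rightarrow> ('e \<Rightarrow>\<^sub>L 'x) \<Rightarrow> real" where
  "fval ps T = (\<Sum>p\<leftarrow>ps. blinfun_apply (snd p) (blinfun_apply T (fst p)))"

definition fcost :: "('e::real_normed_vector \<times> ('x::real_normed_vector \<Rightarrow>\<^sub>L real)) list \<Rightarrow> real" where
  "fcost ps = (\<Sum>p\<leftarrow>ps. norm (fst p) * norm (snd p))"

definition fa :: "('e::real_normed_vector \<times> 'f) list \<Rightarrow> nat \<Rightarrow> 'e" where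
  "fa ps i = (if i < length ps then fst (ps ! i) else 0)"
definition ff :: "('e \<times> ('x::real_normed_vector \<Rightarrow>\<^sub>L real)) list \<Rightarrow> nat \<Rightarrow> ('x \<Rightarrow>\<^sub>L real)" where
  "ff ps i = (if i < length ps then snd (ps ! i) else 0)"

lemma suminf_list:
  fixes g :: "'a \<Rightarrow> real"
  assumes "\<And>i. i \<ge> length ps \<Longrightarrow> h i = 0" "\<And>i. i < length ps \<Longrightarrow> h i = g (ps ! i)"
  shows "suminf h = (\<Sum>p\<leftarrow>ps. g p)" and "summable h"
proof -
  have "suminf h = (\<Sum>i\<in>{..<length ps}. h i)" by (rule suminf_finite) (use assms in auto)
  also have "\<dots> = (\<Sum>i\<in>{..<length ps}. g (ps ! i))" using assms by simp
  also have "\<dots> = (\<Sum>p\<leftarrow>ps. g p)"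
    by (simp add: sum_list_sum_nth atLeast0LessThan)
  finally show "suminf h = (\<Sum>p\<leftarrow>ps. g p)" .
  show "summable h" by (rule summable_finite[of "{..<length ps}"]) (use assms in auto)
qed

lemma ftens_ok: "rep_ok (fa ps) (ff ps)"
  unfolding rep_ok_def by (rule suminf_list(2)[where g="\<lambda>p. norm (fst p) * norm (snd p)"]) (auto simp: fa_def ff_def)

lemma ftens_in: "tens_rep (fa ps) (ff ps) \<in> proj_tensor"
  unfolding proj_tensor_def using ftens_ok by blast

lemma ftens_norm: "proj_norm (tens_rep (fa ps) (ff ps)) \<le> fcost ps"
proof -
  have "proj_norm (tens_rep (fa ps) (ff ps)) \<le> (\<Sum>i. norm (fa ps i) * norm (ff ps i))"
    by (rule pn_le[OF ftens_ok refl])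
  also have "\<dots> = fcost ps" unfolding fcost_def
    by (rule suminf_list(1)) (auto simp: fa_def ff_def)
  finally show ?thesis .
qed

lemma ftens_eval: "tens_eval (tens_rep (fa ps) (ff ps)) T = fval ps T"
  unfolding tens_eval_def tens_rep_def fval_def using bb_eval[of T]
  by (simp, intro suminf_list(1)) (auto simp: fa_def ff_def)

lemma fval_append: "fval (ps @ qs) T = fval ps T + fval qs T" by (simp add: fval_def)
lemma fcost_append: "fcost (ps @ qs) = fcost ps + fcost qs" by (simp add: fcost_def)

definition fsc :: "real \<Rightarrow> ('e::real_normed_vector \<times> 'f) list \<Rightarrow> ('e \<times> 'f) list" where
  "fsc c ps = map (\<lambda>p. (c *\<^sub>R fst p, snd p)) ps"

lemma fval_fsc: "fval (fsc c ps) T = c * fval ps T"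
  by (induction ps) (auto simp: fval_def fsc_def blinfun.scaleR_right algebra_simps)
lemma fcost_fsc: "fcost (fsc c ps) = \<bar>c\<bar> * fcost ps"
  by (induction ps) (auto simp: fcost_def fsc_def algebra_simps)
lemma fcost_nonneg: "0 \<le> fcost ps"
  unfolding fcost_def by (induction ps) auto

lemma helly:
  fixes \<phi> :: "('e::real_normed_vector \<Rightarrow>\<^sub>L 'x::real_normed_vector) \<Rightarrow> real"
  assumes phi: "\<phi> \<in> fin_dual" and G: "finite G" "G \<subseteq> FR" and d: "\<delta> > 0" and e: "\<epsilon> > 0"
  shows "\<exists>ps. fcost ps \<le> dual_norm \<phi> + \<epsilon> \<and> (\<forall>T\<in>G. \<bar>fval ps T - \<phi> T\<bar> \<le> \<delta>)"
proof -
  define M where "M = dual_norm \<phi>"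
  have M0: "M \<ge> 0" unfolding M_def by (rule dual_norm_props(1)[OF phi])
  define k where "k = (M + \<epsilon>) / \<delta>"
  have k: "k > 0" unfolding k_def using M0 e d by simp
  define val where "val z ps = fcost ps + k * (\<Sum>T\<in>G. \<bar>z T - fval ps T\<bar>)"
    for z :: "('e \<Rightarrow>\<^sub>L 'x) \<Rightarrow> real" and ps :: "('e \<times> ('x \<Rightarrow>\<^sub>L real)) list"
  define pf where "pf z = Inf (range (val z))" for z
  have val0: "val z ps \<ge> 0" for z ps
    unfolding val_def using k fcost_nonneg[of ps]
    by (intro add_nonneg_nonneg mult_nonneg_nonneg sum_nonneg) auto
  have bdd: "bdd_below (range (val z))" for z
    using val0 by (auto intro: bdd_belowI[of _ 0])
  have pf_le: "pf z \<le> val z ps" for z ps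
    unfolding pf_def by (rule cInf_lower[OF _ bdd]) simp
  have pf_approx: "\<exists>ps. val z ps < y" if "pf z < y" for z y
    using that cInf_less_iff[of "range (val z)" y] bdd unfolding pf_def by auto
  have pf_ge: "y \<le> pf z" if "\<And>ps. y \<le> val z ps" for y z
    unfolding pf_def by (rule cInf_greatest) (use that in auto)
  have sub: "pf (z1 + z2) \<le> pf z1 + pf z2" for z1 z2
  proof (rule field_le_epsilon)
    fix e :: real assume e: "e > 0"
    obtain ps1 where p1: "val z1 ps1 < pf z1 + e/2" using pf_approx e by force
    obtain ps2 where p2: "val z2 ps2 < pf z2 + e/2" using pf_approx e by force
    have "(\<Sum>T\<in>G. \<bar>(z1 + z2) T - fval (ps1 @ ps2) T\<bar>) \<le>
          (\<Sum>T\<in>G. \<bar>z1 T - fval ps1 T\<bar>) + (\<Sum>T\<in>G. \<bar>z2 T - fval ps2 T\<bar>)"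
      unfolding sum.distrib[symmetric] by (rule sum_mono) (simp add: fval_append)
    then have "k * (\<Sum>T\<in>G. \<bar>(z1 + z2) T - fval (ps1 @ ps2) T\<bar>) \<le>
          k * ((\<Sum>T\<in>G. \<bar>z1 T - fval ps1 T\<bar>) + (\<Sum>T\<in>G. \<bar>z2 T - fval ps2 T\<bar>))"
      using k by (intro mult_left_mono) auto
    then have "val (z1 + z2) (ps1 @ ps2) \<le> val z1 ps1 + val z2 ps2"
      unfolding val_def fcost_append distrib_left by linarith
    then show "pf (z1 + z2) \<le> pf z1 + pf z2 + e"
      using pf_le[of "z1 + z2" "ps1 @ ps2"] p1 p2 by simp
  qed
  have homle: "pf (c *\<^sub>R z) \<le> c * pf z" if c: "c > 0" for c z
  proof -
    have "pf (c *\<^sub>R z) / c \<le> pf z"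
    proof (rule pf_ge)
      fix ps
      have "(\<Sum>T\<in>G. \<bar>(c *\<^sub>R z) T - fval (fsc c ps) T\<bar>) = c * (\<Sum>T\<in>G. \<bar>z T - fval ps T\<bar>)"
        unfolding sum_distrib_left using c
        by (intro sum.cong) (auto simp: fval_fsc abs_mult right_diff_distrib[symmetric])
      then have "val (c *\<^sub>R z) (fsc c ps) = c * val z ps"
        unfolding val_def using c by (simp add: fcost_fsc algebra_simps)
      then have "pf (c *\<^sub>R z) \<le> c * val z ps" using pf_le[of "c *\<^sub>R z" "fsc c ps"] by simp
      then show "pf (c *\<^sub>R z) / c \<le> val z ps" using c by (simp add: divide_le_eq mult.commute)
    qed
    then show ?thesis using c by (simp add: divide_le_eq mult.commute)
  qed
  have hom: "pf (c *\<^sub>R z) = c * pf z" if c: "c > 0" for c z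
  proof (rule antisym)
    show "pf (c *\<^sub>R z) \<le> c * pf z" by (rule homle[OF c])
    have "pf z = pf ((1/c) *\<^sub>R (c *\<^sub>R z))" using c by simp
    also have "\<dots> \<le> (1/c) * pf (c *\<^sub>R z)" using c by (intro homle) simp
    finally show "c * pf z \<le> pf (c *\<^sub>R z)" using c by (simp add: field_simps)
  qed
  obtain F where F: "linear F" "\<forall>x. F x \<le> pf x" "F \<phi> = pf \<phi>"
    using hahn_banach_sublinear[of pf \<phi>, OF sub hom] by blast
  have vanish: "F w = 0" if w: "\<And>T. T \<in> G \<Longrightarrow> w T = 0" for w
  proof -
    have v0: "pf v \<le> 0" if "\<And>T. T \<in> G \<Longrightarrow> v T = 0" for v
      using pf_le[of v "[]"] that unfolding val_def by (simp add: fcost_def fval_def)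
    have "F w \<le> 0" using F(2) v0[OF w] by (meson order_trans)
    moreover have "F (- w) \<le> 0"
    proof -
      have "pf (- w) \<le> 0" by (rule v0) (simp add: w)
      then show ?thesis using F(2) by (meson order_trans)
    qed
    moreover have "F (- w) = - F w" using F(1) by (simp add: linear_neg)
    ultimately show ?thesis by simp
  qed
  define df where "df T = (\<lambda>T'. if T' = T then 1 else (0::real))" for T :: "'e \<Rightarrow>\<^sub>L 'x"
  define c where "c T = F (df T)" for T
  have Fdec: "F z = (\<Sum>T\<in>G. z T * c T)" for z
  proof -
    define s where "s = (\<Sum>T\<in>G. z T *\<^sub>R df T)"
    have sv: "s T' = z T'" if "T' \<in> G" for T'
      unfolding s_def sum_fun_apply using that G(1) by (simp add: df_def if_distrib eq_commute[of T'] cong: if_cong)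
    have "F (z - s) = 0" by (rule vanish) (simp add: sv)
    then have "F z = F s" using F(1) by (simp add: linear_diff)
    also have "\<dots> = (\<Sum>T\<in>G. z T * c T)"
      unfolding s_def c_def using F(1) by (simp add: linear_sum linear_scale)
    finally show ?thesis .
  qed
  define S where "S = (\<Sum>T\<in>G. c T *\<^sub>R T)"
  have Sa: "blinfun_apply f (blinfun_apply S a) \<le> norm a * norm f" for a f
  proof -
    define z where "z = (\<lambda>T::'e \<Rightarrow>\<^sub>L 'x. blinfun_apply f (blinfun_apply T a))"
    have "F z \<le> pf z" using F(2) by blast
    also have "\<dots> \<le> val z [(a, f)]" by (rule pf_le)
    also have "\<dots> = norm a * norm f" unfolding val_def z_def by (simp add: fcost_def fval_def)
    finally have "F z \<le> norm a * norm f" .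
    moreover have "F z = blinfun_apply f (blinfun_apply S a)"
      unfolding Fdec S_def z_def
      by (simp add: blinfun.sum_left blinfun.scaleR_left blinfun.sum_right blinfun.scaleR_right mult.commute)
    ultimately show ?thesis by simp
  qed
  have nS: "norm S \<le> 1"
  proof (rule norm_blinfun_bound)
    fix a
    obtain f :: "'x \<Rightarrow>\<^sub>L real" where f: "norm f \<le> 1" "blinfun_apply f (blinfun_apply S a) = norm (blinfun_apply S a)"
      using norming by blast
    have "norm (blinfun_apply S a) \<le> norm a * norm f" using Sa[of f a] f by simp
    also have "\<dots> \<le> norm a * 1" using f by (intro mult_left_mono) auto
    finally show "norm (blinfun_apply S a) \<le> 1 * norm a" by simp
  qed simp
  have "pf \<phi> = \<phi> S"
    unfolding F(3)[symmetric] Fdec S_def using phi_sum[OF phi G] by (simp add: mult.commute)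
  also have "\<dots> \<le> \<bar>\<phi> S\<bar>" by simp
  also have "\<dots> \<le> M * norm S" unfolding M_def
    by (rule dual_norm_props(2)[OF phi]) (unfold S_def, rule fr_sum[OF G])
  also have "\<dots> \<le> M" using nS M0 by (simp add: mult_left_le)
  finally have "pf \<phi> < M + \<epsilon>" using e by simp
  then obtain ps where ps: "val \<phi> ps < M + \<epsilon>" using pf_approx by blast
  have sG0: "0 \<le> (\<Sum>T\<in>G. \<bar>\<phi> T - fval ps T\<bar>)" by (simp add: sum_nonneg)
  have "fcost ps \<le> M + \<epsilon>" using ps sG0 k unfolding val_def by (smt (verit) mult_nonneg_nonneg)
  moreover have "\<bar>fval ps T - \<phi> T\<bar> \<le> \<delta>" if T: "T \<in> G" for T
  proof -
    have "k * (\<Sum>T\<in>G. \<bar>\<phi> T - fval ps T\<bar>) < M + \<epsilon>" using ps fcost_nonneg[of ps] unfolding val_def by simp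
    then have "(M + \<epsilon>) * (\<Sum>T\<in>G. \<bar>\<phi> T - fval ps T\<bar>) < (M + \<epsilon>) * \<delta>"
      unfolding k_def using d M0 e by (simp add: field_simps)
    then have "(\<Sum>T\<in>G. \<bar>\<phi> T - fval ps T\<bar>) < \<delta>"
      using M0 e by (simp add: mult_less_cancel_left_pos)
    moreover have "\<bar>\<phi> T - fval ps T\<bar> \<le> (\<Sum>T\<in>G. \<bar>\<phi> T - fval ps T\<bar>)"
      by (rule member_le_sum[OF T]) (auto simp: G(1))
    ultimately show ?thesis by (simp add: abs_minus_commute)
  qed
  ultimately show ?thesis unfolding M_def by blast
qed

lemma tens_diff:
  assumes "u \<in> proj_tensor" "v \<in> proj_tensor"
  shows "(\<lambda>B. u B - v B) \<in> proj_tensor" "proj_norm (\<lambda>B. u B - v B) \<le> proj_norm u + proj_norm v"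
proof -
  have e: "(\<lambda>B. u B - v B) = (\<lambda>B. (-1) * v B + u B)" by auto
  show "(\<lambda>B. u B - v B) \<in> proj_tensor" unfolding e by (rule tens_comb(1)[OF assms(2,1)])
  show "proj_norm (\<lambda>B. u B - v B) \<le> proj_norm u + proj_norm v"
    unfolding e using tens_comb(2)[OF assms(2,1), of "-1"] by simp
qed

lemma pn_diff_sym:
  assumes "u \<in> proj_tensor" "v \<in> proj_tensor"
  shows "proj_norm (\<lambda>B. u B - v B) \<le> proj_norm (\<lambda>B. v B - u B)"
proof -
  have w: "(\<lambda>B. v B - u B) \<in> proj_tensor" by (rule tens_diff(1)[OF assms(2,1)])
  have e: "(\<lambda>B. u B - v B) = (\<lambda>B. (-1) * (v B - u B) + 0)" by auto
  show ?thesis unfolding e using tens_comb(2)[OF w tens_zero(1), of "-1"] by (simp add: tens_zero(2))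
qed

lemma pn_diff_tri:
  assumes "u \<in> proj_tensor" "v \<in> proj_tensor" "w \<in> proj_tensor"
  shows "proj_norm (\<lambda>B. u B - w B) \<le> proj_norm (\<lambda>B. u B - v B) + proj_norm (\<lambda>B. v B - w B)"
proof -
  have a: "(\<lambda>B. u B - v B) \<in> proj_tensor" by (rule tens_diff(1)[OF assms(1,2)])
  have b: "(\<lambda>B. v B - w B) \<in> proj_tensor" by (rule tens_diff(1)[OF assms(2,3)])
  have e: "(\<lambda>B. u B - w B) = (\<lambda>B. 1 * (u B - v B) + (v B - w B))" by auto
  show ?thesis unfolding e using tens_comb(2)[OF a b, of 1] by simp
qed

lemma tens_eval_lin:
  fixes T S :: "'e::real_normed_vector \<Rightarrow>\<^sub>L 'x::real_normed_vector"
  assumes u: "u \<in> proj_tensor"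
  shows "tens_eval u (c *\<^sub>R T + S) = c * tens_eval u T + tens_eval u S"
proof -
  obtain a f where af: "rep_ok a f" "u = tens_rep a f" using u unfolding proj_tensor_def by blast
  have s1: "summable (\<lambda>i. blinfun_apply (f i) (blinfun_apply T (a i)))"
    by (rule bb_summable[OF bb_eval af(1)])
  have s2: "summable (\<lambda>i. blinfun_apply (f i) (blinfun_apply S (a i)))"
    by (rule bb_summable[OF bb_eval af(1)])
  have "(\<Sum>i. blinfun_apply (f i) (blinfun_apply (c *\<^sub>R T + S) (a i)))
      = (\<Sum>i. c * blinfun_apply (f i) (blinfun_apply T (a i)) + blinfun_apply (f i) (blinfun_apply S (a i)))"
    by (simp add: blinfun.add_left blinfun.scaleR_left blinfun.add_right blinfun.scaleR_right)
  also have "\<dots> = c * (\<Sum>i. blinfun_apply (f i) (blinfun_apply T (a i))) + (\<Sum>i. blinfun_apply (f i) (blinfun_apply S (a i)))"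
    using suminf_add[OF summable_mult[OF s1, of c] s2] suminf_mult[OF s1, of c] by simp
  finally show ?thesis unfolding af(2) tens_eval_def tens_rep_def using bb_eval[of T] bb_eval[of S] bb_eval[of "c *\<^sub>R T + S"]
    by simp
qed

lemma tens_eval_diff:
  "tens_eval (\<lambda>B. u B - v B) T = tens_eval u T - tens_eval v T"
  unfolding tens_eval_def by simp

lemma tens_eval_comb:
  "tens_eval (\<lambda>B. c * u B + v B) T = c * tens_eval u T + tens_eval v T"
  unfolding tens_eval_def by simp

lemma bdd_famD:
  assumes "\<xi> \<in> bdd_fam"
  shows "\<And>\<alpha>. \<xi> \<alpha> \<in> proj_tensor" and "\<exists>M. \<forall>\<alpha>. proj_norm (\<xi> \<alpha>) \<le> M"
  using assms unfolding bdd_fam_def by auto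

lemma bdd_fam_comb:
  assumes "\<xi> \<in> bdd_fam" "\<eta> \<in> bdd_fam"
  shows "(\<lambda>\<alpha> B. c * \<xi> \<alpha> B + \<eta> \<alpha> B) \<in> bdd_fam"
proof -
  obtain M1 where M1: "\<forall>\<alpha>. proj_norm (\<xi> \<alpha>) \<le> M1" using bdd_famD(2)[OF assms(1)] by blast
  obtain M2 where M2: "\<forall>\<alpha>. proj_norm (\<eta> \<alpha>) \<le> M2" using bdd_famD(2)[OF assms(2)] by blast
  have "proj_norm (\<lambda>B. c * \<xi> \<alpha> B + \<eta> \<alpha> B) \<le> \<bar>c\<bar> * M1 + M2" for \<alpha>
  proof -
    have "\<bar>c\<bar> * proj_norm (\<xi> \<alpha>) \<le> \<bar>c\<bar> * M1" using M1 by (intro mult_left_mono) auto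
    then show ?thesis
      using tens_comb(2)[OF bdd_famD(1)[OF assms(1)] bdd_famD(1)[OF assms(2)], of c \<alpha> \<alpha>] M2[rule_format, of \<alpha>] by linarith
  qed
  then show ?thesis unfolding bdd_fam_def using tens_comb(1)[OF bdd_famD(1)[OF assms(1)] bdd_famD(1)[OF assms(2)]]
    by blast
qed

lemma bdd_fam_diff:
  assumes "\<xi> \<in> bdd_fam" "\<eta> \<in> bdd_fam"
  shows "fam_diff \<eta> \<xi> \<in> bdd_fam"
proof -
  have "fam_diff \<eta> \<xi> = (\<lambda>\<alpha> B. (-1) * \<xi> \<alpha> B + \<eta> \<alpha> B)" unfolding fam_diff_def by auto
  then show ?thesis using bdd_fam_comb[OF assms, of "-1"] by simp
qed

lemma bdd_fam_bounds:
  assumes "\<xi> \<in> bdd_fam"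
  shows "\<exists>M. \<forall>\<alpha>. \<bar>proj_norm (\<xi> \<alpha>)\<bar> \<le> M \<and> (\<forall>T. \<bar>tens_eval (\<xi> \<alpha>) T\<bar> \<le> M * norm T)"
proof -
  obtain M where M: "\<forall>\<alpha>. proj_norm (\<xi> \<alpha>) \<le> M" using bdd_famD(2)[OF assms] by blast
  have "\<bar>tens_eval (\<xi> \<alpha>) T\<bar> \<le> M * norm T" for \<alpha> T
  proof -
    have "proj_norm (\<xi> \<alpha>) * norm T \<le> M * norm T" using M by (intro mult_right_mono) auto
    then show ?thesis using tens_eval_bound[OF bdd_famD(1)[OF assms], of \<alpha> T] by linarith
  qed
  moreover have "\<bar>proj_norm (\<xi> \<alpha>)\<bar> \<le> M" for \<alpha> using M pn_nonneg[OF bdd_famD(1)[OF assms]] by auto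
  ultimately show ?thesis by blast
qed

lemma squeeze0:
  fixes f g :: "'a \<Rightarrow> real"
  assumes "\<And>x. 0 \<le> f x" "\<And>x. f x \<le> g x" "(g \<longlongrightarrow> 0) F"
  shows "(f \<longlongrightarrow> 0) F"
  by (rule tendsto_sandwich[OF _ _ tendsto_const assms(3)]) (use assms in \<open>auto intro: always_eventually\<close>)

context
  fixes U :: "'i filter"
  assumes U: "ultrafilter U"
begin

lemma Ub: "U \<noteq> bot" using U unfolding ultrafilter_def by simp

lemma lim_eval:
  assumes "\<xi> \<in> bdd_fam"
  shows "((\<lambda>\<alpha>. tens_eval (\<xi> \<alpha>) T) \<longlongrightarrow> Lim U (\<lambda>\<alpha>. tens_eval (\<xi> \<alpha>) T)) U"
proof -
  obtain M where "\<forall>\<alpha>. \<bar>tens_eval (\<xi> \<alpha>) T\<bar> \<le> M * norm T" using bdd_fam_bounds[OF assms] by blast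
  then show ?thesis by (intro ultra_tendsto_bounded[OF U]) blast
qed

lemma lim_pn:
  assumes "\<xi> \<in> bdd_fam"
  shows "((\<lambda>\<alpha>. proj_norm (\<xi> \<alpha>)) \<longlongrightarrow> Lim U (\<lambda>\<alpha>. proj_norm (\<xi> \<alpha>))) U"
proof -
  obtain M where "\<forall>\<alpha>. \<bar>proj_norm (\<xi> \<alpha>)\<bar> \<le> M" using bdd_fam_bounds[OF assms] by blast
  then show ?thesis by (intro ultra_tendsto_bounded[OF U]) blast
qed

lemma self_ucls:
  assumes "\<xi> \<in> bdd_fam" shows "\<xi> \<in> ucls U \<xi>"
proof -
  have "fam_diff \<xi> \<xi> \<alpha> = (\<lambda>B. 0)" for \<alpha> unfolding fam_diff_def by auto
  then show ?thesis unfolding ucls_def using assms by (simp add: tens_zero(2))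
qed

lemma ucls_eq:
  assumes x: "\<xi> \<in> bdd_fam" and y: "\<eta> \<in> bdd_fam"
  shows "ucls U \<eta> = ucls U \<xi> \<longleftrightarrow> ((\<lambda>\<alpha>. proj_norm (fam_diff \<eta> \<xi> \<alpha>)) \<longlongrightarrow> 0) U"
proof
  assume "ucls U \<eta> = ucls U \<xi>"
  then have "\<eta> \<in> ucls U \<xi>" using self_ucls[OF y] by simp
  then show "((\<lambda>\<alpha>. proj_norm (fam_diff \<eta> \<xi> \<alpha>)) \<longlongrightarrow> 0) U" unfolding ucls_def by simp
next
  assume h: "((\<lambda>\<alpha>. proj_norm (fam_diff \<eta> \<xi> \<alpha>)) \<longlongrightarrow> 0) U"
  have xa: "\<xi> \<alpha> \<in> proj_tensor" for \<alpha> using bdd_famD(1)[OF x] .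
  have ya: "\<eta> \<alpha> \<in> proj_tensor" for \<alpha> using bdd_famD(1)[OF y] .
  have h': "((\<lambda>\<alpha>. proj_norm (fam_diff \<xi> \<eta> \<alpha>)) \<longlongrightarrow> 0) U"
    by (rule squeeze0[OF _ _ h]) (auto simp: fam_diff_def intro!: pn_nonneg tens_diff(1) xa ya pn_diff_sym)
  have tr: "((\<lambda>\<alpha>. proj_norm (fam_diff \<zeta> b \<alpha>)) \<longlongrightarrow> 0) U"
    if z: "\<zeta> \<in> bdd_fam" and za: "((\<lambda>\<alpha>. proj_norm (fam_diff \<zeta> a \<alpha>)) \<longlongrightarrow> 0) U"
      and a: "a \<in> bdd_fam" and b: "b \<in> bdd_fam"
      and ab: "((\<lambda>\<alpha>. proj_norm (fam_diff a b \<alpha>)) \<longlongrightarrow> 0) U" for \<zeta> a b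
  proof -
    have "((\<lambda>\<alpha>. proj_norm (fam_diff \<zeta> a \<alpha>) + proj_norm (fam_diff a b \<alpha>)) \<longlongrightarrow> 0 + 0) U"
      by (intro tendsto_add za ab)
    then have s: "((\<lambda>\<alpha>. proj_norm (fam_diff \<zeta> a \<alpha>) + proj_norm (fam_diff a b \<alpha>)) \<longlongrightarrow> 0) U" by simp
    show ?thesis
      by (rule squeeze0[OF _ _ s]) (auto simp: fam_diff_def intro!: pn_nonneg tens_diff(1) pn_diff_tri
          bdd_famD(1)[OF z] bdd_famD(1)[OF a] bdd_famD(1)[OF b])
  qed
  show "ucls U \<eta> = ucls U \<xi>"
  proof (rule set_eqI, rule iffI)
    fix \<zeta> assume "\<zeta> \<in> ucls U \<eta>"
    then show "\<zeta> \<in> ucls U \<xi>" using tr[OF _ _ y x h] unfolding ucls_def by blast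
  next
    fix \<zeta> assume "\<zeta> \<in> ucls U \<xi>"
    then show "\<zeta> \<in> ucls U \<eta>" using tr[OF _ _ x y h'] unfolding ucls_def by blast
  qed
qed

lemma eval_close:
  assumes x: "\<xi> \<in> bdd_fam" and y: "\<eta> \<in> bdd_fam"
    and h: "((\<lambda>\<alpha>. proj_norm (fam_diff \<eta> \<xi> \<alpha>)) \<longlongrightarrow> 0) U"
  shows "((\<lambda>\<alpha>. tens_eval (\<eta> \<alpha>) T - tens_eval (\<xi> \<alpha>) T) \<longlongrightarrow> 0) U"
proof -
  have "((\<lambda>\<alpha>. proj_norm (fam_diff \<eta> \<xi> \<alpha>) * norm T) \<longlongrightarrow> 0 * norm T) U"
    by (intro tendsto_mult h tendsto_const)
  then have lim: "((\<lambda>\<alpha>. proj_norm (fam_diff \<eta> \<xi> \<alpha>) * norm T) \<longlongrightarrow> 0) U" by simp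
  have bd: "\<bar>tens_eval (\<eta> \<alpha>) T - tens_eval (\<xi> \<alpha>) T\<bar> \<le> proj_norm (fam_diff \<eta> \<xi> \<alpha>) * norm T" for \<alpha>
  proof -
    have "tens_eval (\<eta> \<alpha>) T - tens_eval (\<xi> \<alpha>) T = tens_eval (fam_diff \<eta> \<xi> \<alpha>) T"
      unfolding fam_diff_def tens_eval_diff ..
    also have "\<bar>\<dots>\<bar> \<le> proj_norm (fam_diff \<eta> \<xi> \<alpha>) * norm T"
      by (rule tens_eval_bound[OF bdd_famD(1)[OF bdd_fam_diff[OF x y]]])
    finally show ?thesis .
  qed
  have "((\<lambda>\<alpha>. \<bar>tens_eval (\<eta> \<alpha>) T - tens_eval (\<xi> \<alpha>) T\<bar>) \<longlongrightarrow> 0) U"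
    by (rule squeeze0[OF _ bd lim]) simp
  then show ?thesis by (rule tendsto_rabs_zero_cancel)
qed

lemma W0_iff:
  assumes z: "\<zeta> \<in> bdd_fam"
  shows "ucls U \<zeta> \<in> W0 U \<longleftrightarrow> (\<forall>T\<in>FR. ((\<lambda>\<alpha>. tens_eval (\<zeta> \<alpha>) T) \<longlongrightarrow> 0) U)"
proof
  assume "ucls U \<zeta> \<in> W0 U"
  then obtain \<xi> where x: "\<xi> \<in> bdd_fam" "ucls U \<zeta> = ucls U \<xi>" "\<forall>T\<in>FR. ((\<lambda>\<alpha>. tens_eval (\<xi> \<alpha>) T) \<longlongrightarrow> 0) U"
    unfolding W0_def by blast
  have h: "((\<lambda>\<alpha>. proj_norm (fam_diff \<zeta> \<xi> \<alpha>)) \<longlongrightarrow> 0) U" using ucls_eq[OF x(1) z] x(2) by simp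
  have "((\<lambda>\<alpha>. tens_eval (\<zeta> \<alpha>) T) \<longlongrightarrow> 0) U" if T: "T \<in> FR" for T
  proof -
    have "((\<lambda>\<alpha>. (tens_eval (\<zeta> \<alpha>) T - tens_eval (\<xi> \<alpha>) T) + tens_eval (\<xi> \<alpha>) T) \<longlongrightarrow> 0 + 0) U"
      by (intro tendsto_add eval_close[OF x(1) z h]) (use x(3) T in blast)
    then show "((\<lambda>\<alpha>. tens_eval (\<zeta> \<alpha>) T) \<longlongrightarrow> 0) U" by simp
  qed
  then show "\<forall>T\<in>FR. ((\<lambda>\<alpha>. tens_eval (\<zeta> \<alpha>) T) \<longlongrightarrow> 0) U" by blast
next
  assume "\<forall>T\<in>FR. ((\<lambda>\<alpha>. tens_eval (\<zeta> \<alpha>) T) \<longlongrightarrow> 0) U"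
  then show "ucls U \<zeta> \<in> W0 U" unfolding W0_def using z by blast
qed

definition QQ :: "(('e::real_normed_vector \<Rightarrow>\<^sub>L 'x::real_normed_vector) \<Rightarrow> real) \<Rightarrow> (('i \<Rightarrow> ('e, 'x) ptens) set) set" where
  "QQ L = {ucls U \<eta> | \<eta>. \<eta> \<in> bdd_fam \<and> (\<forall>T\<in>FR. ((\<lambda>\<alpha>. tens_eval (\<eta> \<alpha>) T) \<longlongrightarrow> L T) U)}"

lemma QQ_I:
  assumes "\<eta> \<in> bdd_fam" "\<forall>T\<in>FR. ((\<lambda>\<alpha>. tens_eval (\<eta> \<alpha>) T) \<longlongrightarrow> L T) U"
  shows "ucls U \<eta> \<in> QQ L"
  unfolding QQ_def using assms by blast

lemma QQ_cong: "(\<And>T. T \<in> FR \<Longrightarrow> L T = L' T) \<Longrightarrow> QQ L = QQ L'"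
  unfolding QQ_def by auto

lemma qcls_QQ:
  assumes x: "\<xi> \<in> bdd_fam"
  shows "qcls U \<xi> = QQ (\<lambda>T. Lim U (\<lambda>\<alpha>. tens_eval (\<xi> \<alpha>) T))"
proof -
  have key: "ucls U (fam_diff \<eta> \<xi>) \<in> W0 U \<longleftrightarrow>
      (\<forall>T\<in>FR. ((\<lambda>\<alpha>. tens_eval (\<eta> \<alpha>) T) \<longlongrightarrow> Lim U (\<lambda>\<alpha>. tens_eval (\<xi> \<alpha>) T)) U)"
    if y: "\<eta> \<in> bdd_fam" for \<eta>
  proof -
    have d: "tens_eval (fam_diff \<eta> \<xi> \<alpha>) T = tens_eval (\<eta> \<alpha>) T - tens_eval (\<xi> \<alpha>) T" for \<alpha> T
      unfolding fam_diff_def tens_eval_diff ..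
    have "((\<lambda>\<alpha>. tens_eval (\<eta> \<alpha>) T - tens_eval (\<xi> \<alpha>) T) \<longlongrightarrow> 0) U \<longleftrightarrow>
          ((\<lambda>\<alpha>. tens_eval (\<eta> \<alpha>) T) \<longlongrightarrow> Lim U (\<lambda>\<alpha>. tens_eval (\<xi> \<alpha>) T)) U" for T
    proof
      assume "((\<lambda>\<alpha>. tens_eval (\<eta> \<alpha>) T - tens_eval (\<xi> \<alpha>) T) \<longlongrightarrow> 0) U"
      from tendsto_add[OF this lim_eval[OF x, of T]]
      show "((\<lambda>\<alpha>. tens_eval (\<eta> \<alpha>) T) \<longlongrightarrow> Lim U (\<lambda>\<alpha>. tens_eval (\<xi> \<alpha>) T)) U" by simp
    next
      assume "((\<lambda>\<alpha>. tens_eval (\<eta> \<alpha>) T) \<longlongrightarrow> Lim U (\<lambda>\<alpha>. tens_eval (\<xi> \<alpha>) T)) U"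
      from tendsto_diff[OF this lim_eval[OF x, of T]]
      show "((\<lambda>\<alpha>. tens_eval (\<eta> \<alpha>) T - tens_eval (\<xi> \<alpha>) T) \<longlongrightarrow> 0) U" by simp
    qed
    then show ?thesis unfolding W0_iff[OF bdd_fam_diff[OF x y]] d by simp
  qed
  show ?thesis unfolding qcls_def QQ_def using key by blast
qed

lemma QQ_unique:
  assumes x: "\<xi> \<in> bdd_fam" and xl: "\<forall>T\<in>FR. ((\<lambda>\<alpha>. tens_eval (\<xi> \<alpha>) T) \<longlongrightarrow> L T) U"
    and eq: "QQ L = QQ L'" and T: "T \<in> FR"
  shows "L T = L' T"
proof -
  have "ucls U \<xi> \<in> QQ L" unfolding QQ_def using x xl by blast
  then have "ucls U \<xi> \<in> QQ L'" using eq by simp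
  then obtain \<eta> where y: "\<eta> \<in> bdd_fam" "ucls U \<xi> = ucls U \<eta>" "\<forall>T\<in>FR. ((\<lambda>\<alpha>. tens_eval (\<eta> \<alpha>) T) \<longlongrightarrow> L' T) U"
    unfolding QQ_def by blast
  have h: "((\<lambda>\<alpha>. proj_norm (fam_diff \<xi> \<eta> \<alpha>)) \<longlongrightarrow> 0) U" using ucls_eq[OF y(1) x] y(2) by simp
  have "((\<lambda>\<alpha>. (tens_eval (\<xi> \<alpha>) T - tens_eval (\<eta> \<alpha>) T) + tens_eval (\<eta> \<alpha>) T) \<longlongrightarrow> 0 + L' T) U"
    by (intro tendsto_add eval_close[OF y(1) x h]) (use y(3) T in blast)
  then have "((\<lambda>\<alpha>. tens_eval (\<xi> \<alpha>) T) \<longlongrightarrow> L' T) U" by simp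
  moreover have "((\<lambda>\<alpha>. tens_eval (\<xi> \<alpha>) T) \<longlongrightarrow> L T) U" using xl T by blast
  ultimately show ?thesis using tendsto_unique[OF Ub] by blast
qed

lemma QQ_mem:
  assumes "\<eta> \<in> bdd_fam" "ucls U \<eta> \<in> QQ L"
  shows "\<forall>T\<in>FR. ((\<lambda>\<alpha>. tens_eval (\<eta> \<alpha>) T) \<longlongrightarrow> L T) U"
proof -
  obtain \<eta>' where y: "\<eta>' \<in> bdd_fam" "ucls U \<eta> = ucls U \<eta>'" "\<forall>T\<in>FR. ((\<lambda>\<alpha>. tens_eval (\<eta>' \<alpha>) T) \<longlongrightarrow> L T) U"
    using assms(2) unfolding QQ_def by blast
  have h: "((\<lambda>\<alpha>. proj_norm (fam_diff \<eta> \<eta>' \<alpha>)) \<longlongrightarrow> 0) U" using ucls_eq[OF y(1) assms(1)] y(2) by simp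
  have "((\<lambda>\<alpha>. tens_eval (\<eta> \<alpha>) T) \<longlongrightarrow> L T) U" if T: "T \<in> FR" for T
  proof -
    have "((\<lambda>\<alpha>. (tens_eval (\<eta> \<alpha>) T - tens_eval (\<eta>' \<alpha>) T) + tens_eval (\<eta>' \<alpha>) T) \<longlongrightarrow> 0 + L T) U"
      by (intro tendsto_add eval_close[OF y(1) assms(1) h]) (use y(3) T in blast)
    then show ?thesis by simp
  qed
  then show ?thesis by blast
qed

end

definition Bset :: "('e::real_normed_vector \<Rightarrow>\<^sub>L 'x::real_normed_vector) set \<Rightarrow> real \<Rightarrow> ((('e \<Rightarrow>\<^sub>L 'x) \<Rightarrow> real) set \<times> ('e \<Rightarrow>\<^sub>L 'x) set \<times> real) set" where
  "Bset G0 r0 = {\<alpha>. G0 \<subseteq> fst (snd \<alpha>) \<and> finite (fst (snd \<alpha>)) \<and> fst (snd \<alpha>) \<subseteq> FR \<and> 0 < snd (snd \<alpha>) \<and> snd (snd \<alpha>) < r0}"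

definition Base :: "(('e::real_normed_vector \<Rightarrow>\<^sub>L 'x::real_normed_vector) set \<times> real) set" where
  "Base = {b. finite (fst b) \<and> fst b \<subseteq> FR \<and> 0 < snd b}"

definition F0 :: "((('e::real_normed_vector \<Rightarrow>\<^sub>L 'x::real_normed_vector) \<Rightarrow> real) set \<times> ('e \<Rightarrow>\<^sub>L 'x) set \<times> real) filter" where
  "F0 = (INF b\<in>Base. principal (Bset (fst b) (snd b)))"

lemma F0_ev:
  assumes "finite G0" "G0 \<subseteq> FR" "0 < r0"
  shows "eventually (\<lambda>\<alpha>. \<alpha> \<in> Bset G0 r0) F0"
  unfolding F0_def
  by (rule eventually_INF1[of "(G0, r0)"]) (use assms in \<open>auto simp: Base_def eventually_principal\<close>)

lemma F0_nonbot: "(F0 :: ((('e::real_normed_vector \<Rightarrow>\<^sub>L 'x::real_normed_vector) \<Rightarrow> real) set \<times> ('e \<Rightarrow>\<^sub>L 'x) set \<times> real) filter) \<noteq> bot"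
proof
  assume "(F0 :: ((('e \<Rightarrow>\<^sub>L 'x) \<Rightarrow> real) set \<times> ('e \<Rightarrow>\<^sub>L 'x) set \<times> real) filter) = bot"
  then have "eventually (\<lambda>_. False) (F0 :: ((('e \<Rightarrow>\<^sub>L 'x) \<Rightarrow> real) set \<times> ('e \<Rightarrow>\<^sub>L 'x) set \<times> real) filter)"
    by simp
  moreover have "Base \<noteq> ({} :: (('e \<Rightarrow>\<^sub>L 'x) set \<times> real) set)"
    unfolding Base_def by (auto intro!: exI[of _ "{}"] exI[of _ "1::real"])
  moreover have "\<exists>x\<in>Base. principal (Bset (fst x) (snd x)) \<le> inf (principal (Bset (fst a) (snd a))) (principal (Bset (fst b) (snd b)))"
    if "a \<in> (Base :: (('e \<Rightarrow>\<^sub>L 'x) set \<times> real) set)" "b \<in> Base" for a b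
    using that
    by (intro bexI[of _ "(fst a \<union> fst b, min (snd a) (snd b))"]) (auto simp: Base_def Bset_def)
  ultimately obtain b where b: "b \<in> (Base :: (('e \<Rightarrow>\<^sub>L 'x) set \<times> real) set)"
    "eventually (\<lambda>_. False) (principal (Bset (fst b) (snd b) :: ((('e \<Rightarrow>\<^sub>L 'x) \<Rightarrow> real) set \<times> ('e \<Rightarrow>\<^sub>L 'x) set \<times> real) set))"
    unfolding F0_def by (subst (asm) eventually_INF_base) auto
  have "({}, fst b, snd b / 2) \<in> (Bset (fst b) (snd b) :: ((('e \<Rightarrow>\<^sub>L 'x) \<Rightarrow> real) set \<times> ('e \<Rightarrow>\<^sub>L 'x) set \<times> real) set)"
    using b(1) unfolding Base_def Bset_def by auto
  then show False using b(2) by (auto simp: eventually_principal)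
qed

theorem theorem2p2:
  fixes E :: "'e::banach itself" and X :: "'x::banach itself"
  shows "\<exists>(U :: ((('e \<Rightarrow>\<^sub>L 'x) \<Rightarrow> real) set \<times> ('e \<Rightarrow>\<^sub>L 'x) set \<times> real) filter)
             (\<Phi> :: (('e \<Rightarrow>\<^sub>L 'x) \<Rightarrow> real) \<Rightarrow> _).
           ultrafilter U \<and> isometric_iso_dual_quot U \<Phi>"
proof -
  obtain U :: "((('e \<Rightarrow>\<^sub>L 'x) \<Rightarrow> real) set \<times> ('e \<Rightarrow>\<^sub>L 'x) set \<times> real) filter"
    where UF: "U \<le> F0" and U: "ultrafilter U"
    using ultrafilter_exists[OF F0_nonbot] by blast
  have Ub: "U \<noteq> bot" using U unfolding ultrafilter_def by simp
  have evB: "eventually (\<lambda>\<alpha>. \<alpha> \<in> Bset G0 r0) U" if "finite G0" "G0 \<subseteq> FR" "0 < r0" for G0 r0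
    using filter_leD[OF UF F0_ev[OF that]] .
  define hps where "hps \<phi> \<alpha> = (if \<phi> \<in> fin_dual \<and> finite (fst (snd \<alpha>)) \<and> fst (snd \<alpha>) \<subseteq> FR \<and> 0 < snd (snd \<alpha>)
     then (SOME ps. fcost ps \<le> dual_norm \<phi> + min (snd (snd \<alpha>)) 1 \<and>
        (\<forall>T\<in>fst (snd \<alpha>). \<bar>fval ps T - \<phi> T\<bar> \<le> snd (snd \<alpha>))) else [])"
    for \<phi> :: "('e \<Rightarrow>\<^sub>L 'x) \<Rightarrow> real" and \<alpha> :: "(('e \<Rightarrow>\<^sub>L 'x) \<Rightarrow> real) set \<times> ('e \<Rightarrow>\<^sub>L 'x) set \<times> real"
  define xi where "xi \<phi> \<alpha> = tens_rep (fa (hps \<phi> \<alpha>)) (ff (hps \<phi> \<alpha>))" for \<phi> \<alpha>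
  have hps_good: "fcost (hps \<phi> \<alpha>) \<le> dual_norm \<phi> + min (snd (snd \<alpha>)) 1 \<and>
        (\<forall>T\<in>fst (snd \<alpha>). \<bar>fval (hps \<phi> \<alpha>) T - \<phi> T\<bar> \<le> snd (snd \<alpha>))"
    if phi: "\<phi> \<in> fin_dual" and a: "finite (fst (snd \<alpha>))" "fst (snd \<alpha>) \<subseteq> FR" "0 < snd (snd \<alpha>)" for \<phi> \<alpha>
  proof -
    have ex: "\<exists>ps. fcost ps \<le> dual_norm \<phi> + min (snd (snd \<alpha>)) 1 \<and>
        (\<forall>T\<in>fst (snd \<alpha>). \<bar>fval ps T - \<phi> T\<bar> \<le> snd (snd \<alpha>))"
      by (rule helly[OF phi a]) (use a in simp)
    have "hps \<phi> \<alpha> = (SOME ps. fcost ps \<le> dual_norm \<phi> + min (snd (snd \<alpha>)) 1 \<and>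
        (\<forall>T\<in>fst (snd \<alpha>). \<bar>fval ps T - \<phi> T\<bar> \<le> snd (snd \<alpha>)))"
      unfolding hps_def using phi a by simp
    then show ?thesis using someI_ex[OF ex] by simp
  qed
  have xi_bdd: "xi \<phi> \<in> bdd_fam" if phi: "\<phi> \<in> fin_dual" for \<phi>
  proof -
    have "proj_norm (xi \<phi> \<alpha>) \<le> dual_norm \<phi> + 1" for \<alpha>
    proof -
      have "proj_norm (xi \<phi> \<alpha>) \<le> fcost (hps \<phi> \<alpha>)" unfolding xi_def by (rule ftens_norm)
      also have "\<dots> \<le> dual_norm \<phi> + 1"
      proof (cases "finite (fst (snd \<alpha>)) \<and> fst (snd \<alpha>) \<subseteq> FR \<and> 0 < snd (snd \<alpha>)")
        case True
        then have "fcost (hps \<phi> \<alpha>) \<le> dual_norm \<phi> + min (snd (snd \<alpha>)) 1" using hps_good[OF phi] by blast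
        then show ?thesis using min.cobounded2[of "snd (snd \<alpha>)" 1] by linarith
      next
        case False
        then have "hps \<phi> \<alpha> = []" unfolding hps_def by auto
        then show ?thesis using dual_norm_props(1)[OF phi] by (simp add: fcost_def)
      qed
      finally show ?thesis .
    qed
    then show ?thesis unfolding bdd_fam_def xi_def using ftens_in by blast
  qed
  have xi_lim: "((\<lambda>\<alpha>. tens_eval (xi \<phi> \<alpha>) T) \<longlongrightarrow> \<phi> T) U" if phi: "\<phi> \<in> fin_dual" and T: "T \<in> FR" for \<phi> T
  proof (rule tendstoI)
    fix e :: real assume e: "e > 0"
    have "eventually (\<lambda>\<alpha>. \<alpha> \<in> Bset {T} e) U" by (rule evB) (use T e in auto)
    then show "eventually (\<lambda>\<alpha>. dist (tens_eval (xi \<phi> \<alpha>) T) (\<phi> T) < e) U"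
    proof (rule eventually_mono)
      fix \<alpha> assume "\<alpha> \<in> Bset {T} e"
      then have a: "T \<in> fst (snd \<alpha>)" "finite (fst (snd \<alpha>))" "fst (snd \<alpha>) \<subseteq> FR" "0 < snd (snd \<alpha>)" "snd (snd \<alpha>) < e"
        unfolding Bset_def by auto
      have "\<bar>fval (hps \<phi> \<alpha>) T - \<phi> T\<bar> \<le> snd (snd \<alpha>)" using hps_good[OF phi a(2-4)] a(1) by blast
      then show "dist (tens_eval (xi \<phi> \<alpha>) T) (\<phi> T) < e"
        unfolding xi_def ftens_eval dist_real_def using a(5) by simp
    qed
  qed
  have xi_norm: "eventually (\<lambda>\<alpha>. proj_norm (xi \<phi> \<alpha>) \<le> dual_norm \<phi> + e) U" if phi: "\<phi> \<in> fin_dual" and e: "e > 0" for \<phi> e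
  proof -
    have "eventually (\<lambda>\<alpha>. \<alpha> \<in> Bset {} e) U" by (rule evB) (use e in auto)
    then show ?thesis
    proof (rule eventually_mono)
      fix \<alpha> :: "(('e \<Rightarrow>\<^sub>L 'x) \<Rightarrow> real) set \<times> ('e \<Rightarrow>\<^sub>L 'x) set \<times> real"
      assume "\<alpha> \<in> Bset {} e"
      then have a: "finite (fst (snd \<alpha>))" "fst (snd \<alpha>) \<subseteq> FR" "0 < snd (snd \<alpha>)" "snd (snd \<alpha>) < e"
        unfolding Bset_def by auto
      have "proj_norm (xi \<phi> \<alpha>) \<le> fcost (hps \<phi> \<alpha>)" unfolding xi_def by (rule ftens_norm)
      also have "\<dots> \<le> dual_norm \<phi> + min (snd (snd \<alpha>)) 1" using hps_good[OF phi a(1-3)] by blast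
      also have "\<dots> \<le> dual_norm \<phi> + e" using a(4) by simp
      finally show "proj_norm (xi \<phi> \<alpha>) \<le> dual_norm \<phi> + e" .
    qed
  qed
  define Lf where "Lf \<xi> T = Lim U (\<lambda>\<alpha>. tens_eval (\<xi> \<alpha>) T)"
    for \<xi> :: "_ \<Rightarrow> ('e,'x) ptens" and T
  have realize: "QQ U \<phi> = qcls U (xi \<phi>)" if phi: "\<phi> \<in> fin_dual" for \<phi>
  proof -
    have "qcls U (xi \<phi>) = QQ U (\<lambda>T. Lim U (\<lambda>\<alpha>. tens_eval (xi \<phi> \<alpha>) T))"
      by (rule qcls_QQ[OF U xi_bdd[OF phi]])
    also have "\<dots> = QQ U \<phi>"
      by (rule QQ_cong[OF U]) (use tendsto_Lim[OF Ub xi_lim[OF phi]] in auto)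
    finally show ?thesis by simp
  qed
  have agree: "\<phi> T = Lf \<xi> T"
    if phi: "\<phi> \<in> fin_dual" and x: "\<xi> \<in> bdd_fam" and eq: "QQ U \<phi> = qcls U \<xi>" and T: "T \<in> FR" for \<phi> \<xi> T
  proof -
    have "QQ U \<phi> = QQ U (Lf \<xi>)" unfolding eq Lf_def by (rule qcls_QQ[OF U x])
    moreover have "\<forall>T\<in>FR. ((\<lambda>\<alpha>. tens_eval (xi \<phi> \<alpha>) T) \<longlongrightarrow> \<phi> T) U" using xi_lim[OF phi] by blast
    ultimately show ?thesis using QQ_unique[OF U xi_bdd[OF phi] _ _ T] by blast
  qed
  have inj: "inj_on (QQ U :: (('e \<Rightarrow>\<^sub>L 'x) \<Rightarrow> real) \<Rightarrow> _) fin_dual"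
  proof (rule inj_onI)
    fix \<phi> \<psi> :: "('e \<Rightarrow>\<^sub>L 'x) \<Rightarrow> real" assume phi: "\<phi> \<in> fin_dual" and psi: "\<psi> \<in> fin_dual" and eq: "QQ U \<phi> = QQ U \<psi>"
    show "\<phi> = \<psi>"
    proof (rule ext)
      fix T
      show "\<phi> T = \<psi> T"
      proof (cases "T \<in> FR")
        case True
        have "\<forall>T\<in>FR. ((\<lambda>\<alpha>. tens_eval (xi \<phi> \<alpha>) T) \<longlongrightarrow> \<phi> T) U" using xi_lim[OF phi] by blast
        then show ?thesis using QQ_unique[OF U xi_bdd[OF phi] _ eq True] by blast
      next
        case False
        then show ?thesis using fin_dualD(4)[OF phi] fin_dualD(4)[OF psi] by simp
      qed
    qed
  qed
  have surj: "(QQ U :: (('e \<Rightarrow>\<^sub>L 'x) \<Rightarrow> real) \<Rightarrow> _) ` fin_dual = ultra_quot U"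
  proof
    show "(QQ U :: (('e \<Rightarrow>\<^sub>L 'x) \<Rightarrow> real) \<Rightarrow> _) ` fin_dual \<subseteq> ultra_quot U"
    proof
      fix C assume "C \<in> (QQ U :: (('e \<Rightarrow>\<^sub>L 'x) \<Rightarrow> real) \<Rightarrow> _) ` fin_dual"
      then obtain \<phi> :: "('e \<Rightarrow>\<^sub>L 'x) \<Rightarrow> real" where "\<phi> \<in> fin_dual" "C = QQ U \<phi>" by blast
      then show "C \<in> ultra_quot U" unfolding ultra_quot_def using realize xi_bdd by blast
    qed
    show "ultra_quot U \<subseteq> (QQ U :: (('e \<Rightarrow>\<^sub>L 'x) \<Rightarrow> real) \<Rightarrow> _) ` fin_dual"
    proof
      fix C :: "((((('e \<Rightarrow>\<^sub>L 'x) \<Rightarrow> real) set \<times> ('e \<Rightarrow>\<^sub>L 'x) set \<times> real) \<Rightarrow> ('e,'x) ptens) set) set"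
      assume "C \<in> ultra_quot U"
      then obtain \<xi> where x: "\<xi> \<in> bdd_fam" and C: "C = qcls U \<xi>" unfolding ultra_quot_def by blast
      obtain Mx where Mx: "\<forall>\<alpha>. \<bar>proj_norm (\<xi> \<alpha>)\<bar> \<le> Mx \<and> (\<forall>T. \<bar>tens_eval (\<xi> \<alpha>) T\<bar> \<le> Mx * norm T)"
        using bdd_fam_bounds[OF x] by blast
      have xa: "\<xi> \<alpha> \<in> proj_tensor" for \<alpha> using bdd_famD(1)[OF x] .
      define \<phi> where "\<phi> T = (if T \<in> FR then Lf \<xi> T else 0)" for T
      have lim: "((\<lambda>\<alpha>. tens_eval (\<xi> \<alpha>) T) \<longlongrightarrow> Lf \<xi> T) U" for T
        unfolding Lf_def by (rule lim_eval[OF U x])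
      have Lf_comb: "Lf \<xi> (c *\<^sub>R T + S) = c * Lf \<xi> T + Lf \<xi> S" for c T S
      proof -
        have "((\<lambda>\<alpha>. c * tens_eval (\<xi> \<alpha>) T + tens_eval (\<xi> \<alpha>) S) \<longlongrightarrow> c * Lf \<xi> T + Lf \<xi> S) U"
          by (intro tendsto_add tendsto_mult tendsto_const lim)
        then have "((\<lambda>\<alpha>. tens_eval (\<xi> \<alpha>) (c *\<^sub>R T + S)) \<longlongrightarrow> c * Lf \<xi> T + Lf \<xi> S) U"
          by (simp add: tens_eval_lin[OF xa])
        then show ?thesis using tendsto_unique[OF Ub lim] by blast
      qed
      have Lf0: "Lf \<xi> 0 = 0"
        using Lf_comb[of 1 0 0] by simp
      have "\<phi> \<in> fin_dual"
        unfolding fin_dual_def mem_Collect_eq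
      proof (intro conjI ballI allI impI)
        fix T S :: "'e \<Rightarrow>\<^sub>L 'x" assume "T \<in> FR" "S \<in> FR"
        then show "\<phi> (T + S) = \<phi> T + \<phi> S"
          unfolding \<phi>_def using fr_add[of T S] Lf_comb[of 1 T S] by simp
      next
        fix c and T :: "'e \<Rightarrow>\<^sub>L 'x" assume "T \<in> FR"
        then show "\<phi> (c *\<^sub>R T) = c * \<phi> T"
          unfolding \<phi>_def using fr_scale[of T c] Lf_comb[of c T 0] Lf0 by simp
      next
        show "\<exists>C. \<forall>T\<in>FR. \<bar>\<phi> T\<bar> \<le> C * norm T"
        proof (intro exI ballI)
          fix T :: "'e \<Rightarrow>\<^sub>L 'x" assume "T \<in> FR"
          have "\<bar>Lf \<xi> T\<bar> \<le> Mx * norm T"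
            by (rule tendsto_upperbound[OF tendsto_rabs[OF lim] _ Ub]) (use Mx in \<open>auto intro: always_eventually\<close>)
          then show "\<bar>\<phi> T\<bar> \<le> Mx * norm T" unfolding \<phi>_def using \<open>T \<in> FR\<close> by simp
        qed
      next
        fix T :: "'e \<Rightarrow>\<^sub>L 'x" assume "T \<notin> FR" then show "\<phi> T = 0" unfolding \<phi>_def by simp
      qed
      moreover have "QQ U \<phi> = C"
        unfolding C qcls_QQ[OF U x] by (rule QQ_cong[OF U]) (simp add: \<phi>_def Lf_def)
      ultimately show "C \<in> (QQ U :: (('e \<Rightarrow>\<^sub>L 'x) \<Rightarrow> real) \<Rightarrow> _) ` fin_dual" by blast
    qed
  qed
  have lin: "QQ U (\<lambda>T. c * \<phi> T + \<psi> T) = qcls U (\<lambda>\<alpha> B. c * \<xi> \<alpha> B + \<eta> \<alpha> B)"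
    if phi: "\<phi> \<in> fin_dual" and psi: "\<psi> \<in> fin_dual" and x: "\<xi> \<in> bdd_fam" and y: "\<eta> \<in> bdd_fam"
      and ex: "QQ U \<phi> = qcls U \<xi>" and ey: "QQ U \<psi> = qcls U \<eta>"
    for \<phi> \<psi> :: "('e \<Rightarrow>\<^sub>L 'x) \<Rightarrow> real" and c :: real and \<xi> \<eta> :: "_ \<Rightarrow> ('e,'x) ptens"
  proof -
    have z: "(\<lambda>\<alpha> B. c * \<xi> \<alpha> B + \<eta> \<alpha> B) \<in> bdd_fam" by (rule bdd_fam_comb[OF x y])
    have "qcls U (\<lambda>\<alpha> B. c * \<xi> \<alpha> B + \<eta> \<alpha> B) = QQ U (Lf (\<lambda>\<alpha> B. c * \<xi> \<alpha> B + \<eta> \<alpha> B))"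
      unfolding Lf_def by (rule qcls_QQ[OF U z])
    also have "\<dots> = QQ U (\<lambda>T. c * \<phi> T + \<psi> T)"
    proof (rule QQ_cong[OF U])
      fix T :: "'e \<Rightarrow>\<^sub>L 'x" assume T: "T \<in> FR"
      have "((\<lambda>\<alpha>. c * tens_eval (\<xi> \<alpha>) T + tens_eval (\<eta> \<alpha>) T) \<longlongrightarrow> c * Lf \<xi> T + Lf \<eta> T) U"
        unfolding Lf_def by (intro tendsto_add tendsto_mult tendsto_const lim_eval[OF U x] lim_eval[OF U y])
      then have "Lf (\<lambda>\<alpha> B. c * \<xi> \<alpha> B + \<eta> \<alpha> B) T = c * Lf \<xi> T + Lf \<eta> T"
        unfolding Lf_def tens_eval_comb by (rule tendsto_Lim[OF Ub])
      then show "Lf (\<lambda>\<alpha> B. c * \<xi> \<alpha> B + \<eta> \<alpha> B) T = c * \<phi> T + \<psi> T"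
        using agree[OF phi x ex T] agree[OF psi y ey T] by simp
    qed
    finally show ?thesis by simp
  qed
  have iso: "quot_norm U (QQ U \<phi>) = dual_norm \<phi>" if phi: "\<phi> \<in> fin_dual" for \<phi> :: "('e \<Rightarrow>\<^sub>L 'x) \<Rightarrow> real"
  proof -
    let ?S = "{Lim U (\<lambda>\<alpha>. proj_norm (\<eta> \<alpha>)) | \<eta>. \<eta> \<in> bdd_fam \<and> ucls U \<eta> \<in> QQ U \<phi>}"
    let ?D = "{\<bar>\<phi> T\<bar> | T. T \<in> FR \<and> norm T \<le> 1}"
    have lower: "dual_norm \<phi> \<le> s" if "s \<in> ?S" for s
    proof -
      obtain \<eta> where y: "\<eta> \<in> bdd_fam" "ucls U \<eta> \<in> QQ U \<phi>" and s: "s = Lim U (\<lambda>\<alpha>. proj_norm (\<eta> \<alpha>))"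
        using \<open>s \<in> ?S\<close> by blast
      have yl: "\<forall>T\<in>FR. ((\<lambda>\<alpha>. tens_eval (\<eta> \<alpha>) T) \<longlongrightarrow> \<phi> T) U" by (rule QQ_mem[OF U y])
      have pl: "((\<lambda>\<alpha>. proj_norm (\<eta> \<alpha>)) \<longlongrightarrow> s) U" unfolding s by (rule lim_pn[OF U y(1)])
      show ?thesis unfolding dual_norm_def
      proof (rule cSup_least)
        show "?D \<noteq> {}" using fr_zero by force
        fix d :: real assume "d \<in> ?D"
        then obtain T where T: "d = \<bar>\<phi> T\<bar>" "T \<in> FR" "norm T \<le> 1" by blast
        have "\<bar>tens_eval (\<eta> \<alpha>) T\<bar> \<le> proj_norm (\<eta> \<alpha>)" for \<alpha>
        proof -
          have "\<bar>tens_eval (\<eta> \<alpha>) T\<bar> \<le> proj_norm (\<eta> \<alpha>) * norm T"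
            by (rule tens_eval_bound[OF bdd_famD(1)[OF y(1)]])
          also have "\<dots> \<le> proj_norm (\<eta> \<alpha>) * 1"
            using T(3) pn_nonneg[OF bdd_famD(1)[OF y(1)]] by (intro mult_left_mono) auto
          finally show ?thesis by simp
        qed
        then show "d \<le> s" unfolding T(1)
          by (intro tendsto_le[OF _ pl tendsto_rabs[OF yl[rule_format, OF T(2)]]])
            (auto simp: Ub intro: always_eventually)
      qed
    qed
    have mem: "Lim U (\<lambda>\<alpha>. proj_norm (xi \<phi> \<alpha>)) \<in> ?S"
    proof -
      have "\<forall>T\<in>FR. ((\<lambda>\<alpha>. tens_eval (xi \<phi> \<alpha>) T) \<longlongrightarrow> \<phi> T) U" using xi_lim[OF phi] by blast
      then have "ucls U (xi \<phi>) \<in> QQ U \<phi>" by (rule QQ_I[OF U xi_bdd[OF phi]])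
      then show ?thesis using xi_bdd[OF phi] by blast
    qed
    have upper: "Lim U (\<lambda>\<alpha>. proj_norm (xi \<phi> \<alpha>)) \<le> dual_norm \<phi>"
    proof (rule field_le_epsilon)
      fix e :: real assume e: "e > 0"
      show "Lim U (\<lambda>\<alpha>. proj_norm (xi \<phi> \<alpha>)) \<le> dual_norm \<phi> + e"
        by (rule tendsto_upperbound[OF lim_pn[OF U xi_bdd[OF phi]] _ Ub]) (rule xi_norm[OF phi e])
    qed
    have "quot_norm U (QQ U \<phi>) = Inf ?S" unfolding quot_norm_def by simp
    also have "\<dots> = dual_norm \<phi>"
    proof (rule antisym)
      have "bdd_below ?S" using lower by (intro bdd_belowI[of _ "dual_norm \<phi>"]) blast
      then have "Inf ?S \<le> Lim U (\<lambda>\<alpha>. proj_norm (xi \<phi> \<alpha>))" by (rule cInf_lower[OF mem])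
      then show "Inf ?S \<le> dual_norm \<phi>" using upper by simp
      show "dual_norm \<phi> \<le> Inf ?S" by (rule cInf_greatest) (use mem lower in blast)+
    qed
    finally show ?thesis .
  qed
  have "isometric_iso_dual_quot U (QQ U :: (('e \<Rightarrow>\<^sub>L 'x) \<Rightarrow> real) \<Rightarrow> _)"
    unfolding isometric_iso_dual_quot_def bij_betw_def
    apply (intro conjI ballI allI impI)
       apply (rule inj)
      apply (rule surj)
     apply (rule lin; assumption)
    apply (rule iso; assumption)
    done
  then show ?thesis using U by blast
qed

end
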